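(* Let $n\ge1$ and let $A$ and $B$ be smooth $\mathbb{R}_{0,m}$-valued functions depending only on $\underline{y}$. The function $$F(X)=\exp(z)A(\underline{y})+\exp(\overline{z})B(\underline{y})$$ is left $n$-monogenic (i.e. $\partial_X^nF=0$) if and only if $\Delta^nA(\underline{y})=0$ and $$B(\underline{y})=\sum_{k=1}^n c_k\,\partial_{\underline{y}}^{2k-1}A(\underline{y}),$$ where the real constants $c_k$ are defined recursively by $$c_1=-\tfrac12,\qquad c_k=-\frac{1}{2^k}\sum_{j=1}^{\lfloor k/2\rfloor}\sum_{i=1}^{j}\binom{k+1}{2j+1}\binom{j}{i}c_{k-i},\quad k\ge2.$$
   Context: Let $m\ge 2$ and let $\mathbb{R}_{0,m}$ be the real Clifford algebra generated by $e_1,\dots,e_m$ with $e_i^2=-1$ and $e_ie_j=-e_je_i$ for $i\neq j$; all products are Clifford products. Identify $(x_0,\dots,x_m)\in\mathbb{R}^{m+1}$ with $X=x_0+\sum_{j=1}^m x_je_j$, and write $z=x_0+x_1e_1$, $\overline{z}=x_0-x_1e_1$, $\underline{y}=\sum_{j=2}^m x_je_j$; $\exp(z)=e^{x_0}(\cos x_1+e_1\sin x_1)$, $\exp(\overline z)=e^{x_0}(\cos x_1-e_1\sin x_1)$. Operators: $\partial_X f=\partial_{x_0}f+\sum_{j=1}^m e_j\partial_{x_j}f$, $\partial_{\underline{y}}f=\sum_{j=2}^m e_j\partial_{x_j}f$; powers denote iterated left application. $\Delta=\sum_{j=2}^m\partial_{x_j}^2=-\partial_{\underline{y}}^2$. 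*)

theory Defs
  imports "HOL-Analysis.Analysis"
begin

text \<open>Real Clifford algebra R_{0,m}: a multivector is a function from blades
(finite sets of indices in {1..m}) to real coefficients; blades not contained
in {1..m} carry coefficient 0.\<close>

type_synonym mvec = "nat set \<Rightarrow> real"

text \<open>Points of R^{m+1}: coordinates x 0, ..., x m (other coordinates are ignored).\<close>
type_synonym point = "nat \<Rightarrow> real"

definition cl_valued :: "nat \<Rightarrow> mvec \<Rightarrow> bool" where
  "cl_valued m u \<longleftrightarrow> (\<forall>C. \<not> C \<subseteq> {1..m} \<longrightarrow> u C = 0)"

text \<open>Sign in e_A e_B = csign A B e_{A symdiff B}, using e_i^2 = -1 and anticommutation.\<close>
definition csign :: "nat set \<Rightarrow> nat set \<Rightarrow> real" where
  "csign A B = (-1) ^ (card {(a, b). a \<in> A \<and> b \<in> B \<and> b < a} + card (A \<inter> B))"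

definition symd :: "nat set \<Rightarrow> nat set \<Rightarrow> nat set" where
  "symd A B = (A - B) \<union> (B - A)"

definition clmul :: "nat \<Rightarrow> mvec \<Rightarrow> mvec \<Rightarrow> mvec" where
  "clmul m u v = (\<lambda>C. if C \<subseteq> {1..m}
      then (\<Sum>A\<in>Pow {1..m}. csign A (symd A C) * u A * v (symd A C)) else 0)"

definition cladd :: "mvec \<Rightarrow> mvec \<Rightarrow> mvec" where
  "cladd u v = (\<lambda>C. u C + v C)"

definition basis :: "nat \<Rightarrow> mvec" where
  "basis j = (\<lambda>C. if C = {j} then 1 else 0)"

definition pdx :: "nat \<Rightarrow> (point \<Rightarrow> mvec) \<Rightarrow> point \<Rightarrow> mvec" where
  "pdx j f x = (\<lambda>C. deriv (\<lambda>t. f (x(j := t)) C) (x j))"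

definition iterpd :: "nat list \<Rightarrow> (point \<Rightarrow> mvec) \<Rightarrow> point \<Rightarrow> mvec" where
  "iterpd js f = foldr pdx js f"

definition smooth_cl :: "nat \<Rightarrow> (point \<Rightarrow> mvec) \<Rightarrow> bool" where
  "smooth_cl m f \<longleftrightarrow> (\<forall>js. set js \<subseteq> {0..m} \<longrightarrow>
      (\<forall>C. continuous_on UNIV (\<lambda>x. iterpd js f x C)) \<and>
      (\<forall>j\<in>{0..m}. \<forall>x C. (\<lambda>t. iterpd js f (x(j := t)) C) differentiable (at (x j))))"

definition depends_only :: "nat set \<Rightarrow> (point \<Rightarrow> mvec) \<Rightarrow> bool" where
  "depends_only S f \<longleftrightarrow> (\<forall>x x'. (\<forall>j\<in>S. x j = x' j) \<longrightarrow> f x = f x')"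

definition dirac :: "nat \<Rightarrow> (point \<Rightarrow> mvec) \<Rightarrow> point \<Rightarrow> mvec" where
  "dirac m f = (\<lambda>x C. pdx 0 f x C + (\<Sum>j\<in>{1..m}. clmul m (basis j) (pdx j f x) C))"

definition dirac_y :: "nat \<Rightarrow> (point \<Rightarrow> mvec) \<Rightarrow> point \<Rightarrow> mvec" where
  "dirac_y m f = (\<lambda>x C. \<Sum>j\<in>{2..m}. clmul m (basis j) (pdx j f x) C)"

definition lap :: "nat \<Rightarrow> (point \<Rightarrow> mvec) \<Rightarrow> point \<Rightarrow> mvec" where
  "lap m f = (\<lambda>x C. \<Sum>j\<in>{2..m}. pdx j (pdx j f) x C)"

text \<open>exp(z) and exp(zbar) with z = x_0 + x_1 e_1.\<close>
definition exp_z :: "point \<Rightarrow> mvec" where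
  "exp_z x = (\<lambda>C. if C = {} then exp (x 0) * cos (x 1)
                 else if C = {1} then exp (x 0) * sin (x 1) else 0)"

definition exp_zbar :: "point \<Rightarrow> mvec" where
  "exp_zbar x = (\<lambda>C. if C = {} then exp (x 0) * cos (x 1)
                 else if C = {1} then - (exp (x 0) * sin (x 1)) else 0)"

text \<open>The constants c_k (k \<ge> 1); the value at 0 is irrelevant.\<close>
function cc :: "nat \<Rightarrow> real" where
  "cc k = (if k \<le> 1 then - 1 / 2
           else - (1 / 2 ^ k) * (\<Sum>j = 1..k div 2. \<Sum>i = 1..j.
                  real ((k + 1) choose (2 * j + 1)) * real (j choose i) * cc (k - i)))"
  by auto
termination
  by (relation "Wellfounded.measure id") auto

end

theory Submission
  imports Defs "HOL-Computational_Algebra.Computational_Algebra" "HOL-Library.Function_Algebras"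
begin


function gq :: "nat \<Rightarrow> real" where
  "gq k = (if k = 0 then 0 else if k = 1 then - 1 / 2
           else (1/2) * (\<Sum>i\<in>{1..<k}. gq i * gq (k - i)))"
  by auto
termination by (relation "Wellfounded.measure id") auto

declare gq.simps[simp del]

lemma gq0: "gq 0 = 0" by (subst gq.simps) simp
lemma gq1: "gq 1 = -1/2" by (subst gq.simps) simp
lemma gq1': "gq (Suc 0) = -1/2" by (subst gq.simps) simp
lemma gq2: "k \<ge> 2 \<Longrightarrow> 2 * gq k = (\<Sum>i\<in>{1..<k}. gq i * gq (k - i))"
  by (subst gq.simps) simp

definition GG :: "real fps" where "GG = Abs_fps gq"

lemma GG_sq: "GG * GG = 2 * GG + fps_X"
proof (rule fps_ext)
  fix k
  have "(GG * GG) $ k = (\<Sum>i=0..k. gq i * gq (k - i))"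
    by (simp add: fps_mult_nth GG_def)
  also have "\<dots> = (2 * GG + fps_X) $ k"
  proof (cases "k \<ge> 2")
    case True
    have "(\<Sum>i=0..k. gq i * gq (k - i)) = (\<Sum>i\<in>{1..<k}. gq i * gq (k - i))"
    proof (rule sum.mono_neutral_right)
      show "\<forall>i\<in>{0..k} - {1..<k}. gq i * gq (k - i) = 0"
      proof
        fix i assume "i \<in> {0..k} - {1..<k}"
        then have "i = 0 \<or> i = k" by auto
        then show "gq i * gq (k - i) = 0" by (auto simp: gq0)
      qed
    qed auto
    then show ?thesis using True gq2[OF True]
      by (simp add: GG_def fps_X_def)
  next
    case False
    then have "k = 0 \<or> k = 1" by auto
    then show ?thesis by (auto simp: gq0 gq1' GG_def fps_X_def)
  qed
  finally show "(GG * GG) $ k = (2 * GG + fps_X) $ k" .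
qed

definition YY :: "real fps" where "YY = 1 + fps_X"

definition Pp :: "nat \<Rightarrow> real fps" where
  "Pp m = (\<Sum>j\<le>m. fps_const (real (m choose (2*j+1))) * YY ^ j)"
definition Qq :: "nat \<Rightarrow> real fps" where
  "Qq m = (\<Sum>j\<le>m. fps_const (real (m choose (2*j))) * YY ^ j)"

lemma Pp_ext: "N \<ge> m \<Longrightarrow> Pp m = (\<Sum>j\<le>N. fps_const (real (m choose (2*j+1))) * YY ^ j)"
  unfolding Pp_def by (rule sum.mono_neutral_left) auto

lemma Qq_ext: "N \<ge> m \<Longrightarrow> Qq m = (\<Sum>j\<le>N. fps_const (real (m choose (2*j))) * YY ^ j)"
  unfolding Qq_def by (rule sum.mono_neutral_left) auto

lemma Pp_Suc: "Pp (Suc m) = Pp m + Qq m"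
proof -
  have "Pp (Suc m) = (\<Sum>j\<le>Suc m. fps_const (real (Suc m choose (2*j+1))) * YY ^ j)"
    by (simp add: Pp_def)
  also have "\<dots> = (\<Sum>j\<le>Suc m. fps_const (real (m choose (2*j+1))) * YY ^ j)
     + (\<Sum>j\<le>Suc m. fps_const (real (m choose (2*j))) * YY ^ j)"
    by (simp add: sum.distrib[symmetric] algebra_simps fps_const_add[symmetric] del: fps_const_add)
  also have "\<dots> = Pp m + Qq m" using Pp_ext[of m "Suc m"] Qq_ext[of m "Suc m"] by simp
  finally show ?thesis .
qed

lemma Qq_Suc: "Qq (Suc m) = Qq m + YY * Pp m"
proof -
  have "Qq (Suc m) = (\<Sum>j\<le>Suc m. fps_const (real (Suc m choose (2*j))) * YY ^ j)"
    by (simp add: Qq_def)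
  also have "\<dots> = 1 + (\<Sum>j\<le>m. fps_const (real (Suc m choose (2*Suc j))) * YY ^ Suc j)"
    by (subst sum.atMost_Suc_shift) simp
  also have "\<dots> = 1 + (\<Sum>j\<le>m. fps_const (real (m choose (2*Suc j))) * YY ^ Suc j)
       + YY * (\<Sum>j\<le>m. fps_const (real (m choose (2*j+1))) * YY ^ j)"
    by (simp add: sum.distrib[symmetric] sum_distrib_left algebra_simps
        fps_const_add[symmetric] del: fps_const_add)
  also have "1 + (\<Sum>j\<le>m. fps_const (real (m choose (2*Suc j))) * YY ^ Suc j)
       = (\<Sum>j\<le>Suc m. fps_const (real (m choose (2*j))) * YY ^ j)"
    by (subst sum.atMost_Suc_shift) simp
  also have "\<dots> = Qq m" using Qq_ext[of m "Suc m"] by simp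
  finally show ?thesis by (simp add: Pp_def)
qed

lemma Pp_0: "Pp 0 = 0" by (simp add: Pp_def)
lemma Pp_1: "Pp (Suc 0) = 1" by (simp add: Pp_def)

lemma Pp_rec: "Pp (Suc (Suc m)) = 2 * Pp (Suc m) + fps_X * Pp m"
proof -
  have "Pp (Suc (Suc m)) = Pp (Suc m) + Qq m + YY * Pp m"
    by (simp add: Pp_Suc Qq_Suc)
  also have "\<dots> = Pp (Suc m) + (Pp (Suc m) - Pp m) + YY * Pp m"
    by (simp add: Pp_Suc)
  finally show ?thesis by (simp add: YY_def algebra_simps)
qed

lemma GG_pow: "GG ^ Suc k = Pp (Suc k) * GG + fps_X * Pp k"
proof (induction k)
  case 0 then show ?case by (simp add: Pp_0 Pp_1)
next
  case (Suc k)
  have "GG ^ Suc (Suc k) = GG * (Pp (Suc k) * GG + fps_X * Pp k)"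
    using Suc by simp
  also have "\<dots> = Pp (Suc k) * (GG * GG) + fps_X * Pp k * GG" by (simp add: algebra_simps)
  also have "\<dots> = Pp (Suc (Suc k)) * GG + fps_X * Pp (Suc k)"
    by (simp add: GG_sq Pp_rec algebra_simps)
  finally show ?case .
qed

lemma Pp_nth0: "Pp (Suc k) $ 0 = 2 ^ k"
proof (induction k rule: nat_less_induct)
  case (1 k)
  show ?case
  proof (cases k)
    case 0 then show ?thesis by (simp add: Pp_1)
  next
    case (Suc k')
    then show ?thesis using 1 by (simp add: Pp_rec)
  qed
qed

lemma YY_pow_nth: "(YY ^ j) $ i = real (j choose i)"
proof -
  have "YY ^ j = fps_binomial (of_nat j)" by (simp add: YY_def fps_binomial_of_nat)
  then show ?thesis by (simp add: binomial_gbinomial)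
qed

lemma Pp_nth: "Pp m $ i = (\<Sum>j\<le>m. real (m choose (2*j+1)) * real (j choose i))"
  by (simp add: Pp_def fps_sum_nth YY_pow_nth)

lemma Pp_nth_top: assumes "k \<ge> 2" shows "Pp k $ (k - 1) = 0"
proof -
  have *: "\<forall>j\<in>{..k}. real (k choose (2*j+1)) * real (j choose (k - 1)) = 0"
  proof
    fix j
    show "real (k choose (2*j+1)) * real (j choose (k - 1)) = 0"
    proof (cases "2*j+1 \<le> k")
      case True then have "j < k - 1" using assms by linarith
      then show ?thesis by simp
    qed simp
  qed
  show ?thesis by (simp only: Pp_nth) (rule sum.neutral[OF *])
qed

lemma GG_factor: "GG = fps_X * Abs_fps (\<lambda>i. gq (Suc i))"
  by (rule fps_ext) (simp add: GG_def fps_X_mult_nth gq0)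

lemma GG_pow_nth: "(GG ^ Suc k) $ k = 0"
proof -
  have "GG ^ Suc k = fps_X ^ Suc k * (Abs_fps (\<lambda>i. gq (Suc i))) ^ Suc k"
    by (subst GG_factor) (simp add: power_mult_distrib)
  then show ?thesis by (simp only:) (subst fps_X_power_mult_nth, simp)
qed

lemma key_coeff: assumes "k \<ge> 2" shows "(Pp (Suc k) * GG) $ k = 0"
proof -
  have "Pp (Suc k) * GG = GG ^ Suc k - fps_X * Pp k" by (simp only: GG_pow) simp
  then have "(Pp (Suc k) * GG) $ k = (GG ^ Suc k) $ k - (fps_X * Pp k) $ k" by simp
  also have "\<dots> = 0" using assms GG_pow_nth Pp_nth_top[OF assms]
    by (simp add: fps_X_mult_nth)
  finally show ?thesis .
qed

lemma gq_paper: assumes "k \<ge> 2"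
  shows "2 ^ k * gq k + (\<Sum>i\<in>{1..k}. (\<Sum>j\<le>Suc k. real (Suc k choose (2*j+1)) * real (j choose i)) * gq (k - i)) = 0"
proof -
  have "(Pp (Suc k) * GG) $ k = (\<Sum>i=0..k. Pp (Suc k) $ i * gq (k - i))"
    by (simp add: fps_mult_nth GG_def)
  also have "\<dots> = Pp (Suc k) $ 0 * gq k + (\<Sum>i\<in>{1..k}. Pp (Suc k) $ i * gq (k - i))"
    by (simp add: sum.atLeast_Suc_atMost)
  also have "\<dots> = 2 ^ k * gq k + (\<Sum>i\<in>{1..k}. (\<Sum>j\<le>Suc k. real (Suc k choose (2*j+1)) * real (j choose i)) * gq (k - i))"
    by (simp only: Pp_nth0, simp only: Pp_nth)
  finally show ?thesis using key_coeff[OF assms] by linarith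
qed


declare cc.simps[simp del]

lemma cc_gq: "k \<ge> 1 \<Longrightarrow> cc k = gq k"
proof (induction k rule: nat_less_induct)
  case (1 k)
  show ?case
  proof (cases "k \<ge> 2")
    case False
    then have "k = 1" using 1(2) by auto
    then show ?thesis by (subst cc.simps) (simp add: gq1')
  next
    case True
    define f where "f i j = real ((k + 1) choose (2 * j + 1)) * real (j choose i) * gq (k - i)" for i j
    have S1: "(\<Sum>j = 1..k div 2. \<Sum>i = 1..j. real ((k + 1) choose (2 * j + 1)) * real (j choose i) * cc (k - i))
        = (\<Sum>j = 1..k div 2. \<Sum>i = 1..j. f i j)"
    proof (rule sum.cong[OF refl], rule sum.cong[OF refl])
      fix j i assume j: "j \<in> {1..k div 2}" and i: "i \<in> {1..j}"
      then have "k - i < k" "k - i \<ge> 1" by auto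
      then show "real ((k + 1) choose (2 * j + 1)) * real (j choose i) * cc (k - i) = f i j"
        using 1(1) by (simp add: f_def)
    qed
    have S2: "(\<Sum>j = 1..k div 2. \<Sum>i = 1..j. f i j) = (\<Sum>j = 1..k div 2. \<Sum>i = 1..k. f i j)"
    proof (rule sum.cong[OF refl], rule sum.mono_neutral_left)
      fix j assume "j \<in> {1..k div 2}"
      then show "{1..j} \<subseteq> {1..k}" by auto
      show "\<forall>i\<in>{1..k} - {1..j}. f i j = 0" by (auto simp: f_def)
    qed auto
    have S3: "(\<Sum>j = 1..k div 2. \<Sum>i = 1..k. f i j) = (\<Sum>j\<le>Suc k. \<Sum>i = 1..k. f i j)"
    proof (rule sum.mono_neutral_left)
      show "\<forall>j\<in>{..Suc k} - {1..k div 2}. (\<Sum>i = 1..k. f i j) = 0"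
      proof
        fix j assume j: "j \<in> {..Suc k} - {1..k div 2}"
        show "(\<Sum>i = 1..k. f i j) = 0"
        proof (cases "j = 0")
          case True then show ?thesis by (intro sum.neutral) (auto simp: f_def)
        next
          case False
          then have "k + 1 < 2 * j + 1" using j by auto
          then have "(k + 1) choose (2 * j + 1) = 0" by (rule binomial_eq_0)
          then show ?thesis by (intro sum.neutral) (simp add: f_def del: binomial_Suc_Suc)
        qed
      qed
    qed auto
    have S4: "(\<Sum>j\<le>Suc k. \<Sum>i = 1..k. f i j)
       = (\<Sum>i\<in>{1..k}. (\<Sum>j\<le>Suc k. real (Suc k choose (2*j+1)) * real (j choose i)) * gq (k - i))"
      by (subst sum.swap) (simp only: sum_distrib_right Suc_eq_plus1, simp add: f_def del: binomial_Suc_Suc)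
    have "cc k = - (1 / 2 ^ k) * (\<Sum>j = 1..k div 2. \<Sum>i = 1..j. real ((k + 1) choose (2 * j + 1)) * real (j choose i) * cc (k - i))"
      using True by (subst cc.simps) simp
    also have "\<dots> = - (1 / 2 ^ k) * (\<Sum>i\<in>{1..k}. (\<Sum>j\<le>Suc k. real (Suc k choose (2*j+1)) * real (j choose i)) * gq (k - i))"
      using S1 S2 S3 S4 by simp
    also have "\<dots> = gq k" using gq_paper[OF True] by (simp add: field_simps)
    finally show ?thesis .
  qed
qed

lemma cc_quad: "K \<ge> 2 \<Longrightarrow> 2 * cc K = (\<Sum>k\<in>{1..<K}. cc k * cc (K - k))"
proof -
  assume K: "K \<ge> 2"
  have "(\<Sum>k\<in>{1..<K}. cc k * cc (K - k)) = (\<Sum>k\<in>{1..<K}. gq k * gq (K - k))"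
    by (rule sum.cong) (auto simp: cc_gq)
  then show ?thesis using gq2[OF K] cc_gq[of K] K by simp
qed

lemma cc1: "cc 1 = -1/2" by (subst cc.simps) simp


instantiation "fun" :: (type, real_vector) real_vector
begin
definition scaleR_fun :: "real \<Rightarrow> ('a \<Rightarrow> 'b) \<Rightarrow> 'a \<Rightarrow> 'b" where
  "scaleR_fun c f = (\<lambda>x. c *\<^sub>R f x)"
instance by standard (simp_all add: scaleR_fun_def fun_eq_iff scaleR_add_right scaleR_add_left)
end

lemma scaleR_fun_apply [simp]: "(c *\<^sub>R f) x = c *\<^sub>R f x"
  by (simp add: scaleR_fun_def)

lemma sum_fun_apply: "(\<Sum>i\<in>S. f i) x = (\<Sum>i\<in>S. f i x)"
  by (induction S rule: infinite_finite_induct) auto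

abbreviation pX :: "real poly" where "pX \<equiv> [:0, 1:]"

fun ma :: "nat \<Rightarrow> real poly" and mb :: "nat \<Rightarrow> real poly"
  and mc :: "nat \<Rightarrow> real poly" and md :: "nat \<Rightarrow> real poly" where
  "ma 0 = 1" | "ma (Suc k) = pX * mc k"
| "mb 0 = 0" | "mb (Suc k) = pX * md k"
| "mc 0 = 0" | "mc (Suc k) = pX * ma k + 2 * mc k"
| "md 0 = 1" | "md (Suc k) = pX * mb k + 2 * md k"

lemma m_det: "ma k * md k - mb k * mc k = (- (pX ^ 2)) ^ k"
proof (induction k)
  case 0 then show ?case by simp
next
  case (Suc k)
  have "ma (Suc k) * md (Suc k) - mb (Suc k) * mc (Suc k) = - (pX ^ 2) * (ma k * md k - mb k * mc k)"
    by (simp add: algebra_simps power2_eq_square)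
  then show ?case using Suc by simp
qed

lemma md_0: "poly (md k) 0 = 2 ^ k"
  by (induction k) simp_all

locale dmod =
  fixes V :: "'v::real_vector set" and D :: "'v \<Rightarrow> 'v"
  assumes V0: "0 \<in> V" and Vadd: "x \<in> V \<Longrightarrow> y \<in> V \<Longrightarrow> x + y \<in> V"
    and Vscale: "x \<in> V \<Longrightarrow> c *\<^sub>R x \<in> V"
    and DV: "x \<in> V \<Longrightarrow> D x \<in> V" and Dadd: "x \<in> V \<Longrightarrow> y \<in> V \<Longrightarrow> D (x + y) = D x + D y"
    and Dscale: "x \<in> V \<Longrightarrow> D (c *\<^sub>R x) = c *\<^sub>R D x"
begin

lemma Vneg: "x \<in> V \<Longrightarrow> - x \<in> V"
  using Vscale[of x "-1"] by simp

lemma Vdiff: "x \<in> V \<Longrightarrow> y \<in> V \<Longrightarrow> x - y \<in> V"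
  using Vadd[of x "-y"] Vneg by simp

lemma Vsum: "(\<And>i. i \<in> S \<Longrightarrow> f i \<in> V) \<Longrightarrow> sum f S \<in> V"
  by (induction S rule: infinite_finite_induct) (auto intro: V0 Vadd)

lemma D0: "D 0 = 0"
  using Dscale[OF V0, of 0] by simp

lemma Dsum: "(\<And>i. i \<in> S \<Longrightarrow> f i \<in> V) \<Longrightarrow> D (sum f S) = (\<Sum>i\<in>S. D (f i))"
proof (induction S rule: infinite_finite_induct)
  case (insert x F)
  then show ?case by (simp add: Dadd Vsum)
qed (auto simp: D0)

lemma Dpow_V: "x \<in> V \<Longrightarrow> (D ^^ i) x \<in> V"
  by (induction i) (auto intro: DV)

lemma Dpow_add: "x \<in> V \<Longrightarrow> y \<in> V \<Longrightarrow> (D ^^ i) (x + y) = (D ^^ i) x + (D ^^ i) y"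
  by (induction i) (auto simp: Dadd Dpow_V)

lemma Dpow_scale: "x \<in> V \<Longrightarrow> (D ^^ i) (c *\<^sub>R x) = c *\<^sub>R (D ^^ i) x"
  by (induction i) (auto simp: Dscale Dpow_V)

lemma Dpow_zero: "(D ^^ i) 0 = 0"
  by (induction i) (auto simp: D0)

definition act :: "real poly \<Rightarrow> 'v \<Rightarrow> 'v" where
  "act p v = (\<Sum>i\<le>degree p. coeff p i *\<^sub>R (D ^^ i) v)"

lemma act_ext: "degree p \<le> N \<Longrightarrow> act p v = (\<Sum>i\<le>N. coeff p i *\<^sub>R (D ^^ i) v)"
  unfolding act_def by (rule sum.mono_neutral_left) (auto simp: coeff_eq_0)

lemma act_V: "v \<in> V \<Longrightarrow> act p v \<in> V"
  unfolding act_def by (intro Vsum Vscale Dpow_V)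

lemma act_add_poly: "act (p + q) v = act p v + act q v"
proof -
  let ?N = "max (degree p) (degree q)"
  have "act (p + q) v = (\<Sum>i\<le>?N. coeff (p + q) i *\<^sub>R (D ^^ i) v)"
    by (rule act_ext) (rule degree_add_le; simp)
  also have "\<dots> = (\<Sum>i\<le>?N. coeff p i *\<^sub>R (D ^^ i) v) + (\<Sum>i\<le>?N. coeff q i *\<^sub>R (D ^^ i) v)"
    by (simp add: scaleR_add_left sum.distrib)
  also have "\<dots> = act p v + act q v" using act_ext[of p ?N v] act_ext[of q ?N v] by simp
  finally show ?thesis .
qed

lemma act_smult: "act (smult c p) v = c *\<^sub>R act p v"
proof -
  have "act (smult c p) v = (\<Sum>i\<le>degree p. coeff (smult c p) i *\<^sub>R (D ^^ i) v)"
    by (rule act_ext) (rule degree_smult_le)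
  then show ?thesis by (simp add: act_def scaleR_sum_right)
qed

lemma act_0p [simp]: "act 0 v = 0"
  by (simp add: act_def)

lemma act_minus_poly: "act (- p) v = - act p v"
  using act_smult[of "-1" p v] by simp

lemma act_diff_poly: "act (p - q) v = act p v - act q v"
  using act_add_poly[of p "-q" v] act_minus_poly[of q v] by simp

lemma act_sum_poly: "act (\<Sum>k\<in>S. p k) v = (\<Sum>k\<in>S. act (p k) v)"
  by (induction S rule: infinite_finite_induct) (auto simp: act_add_poly)

lemma act_add_v: "v \<in> V \<Longrightarrow> w \<in> V \<Longrightarrow> act p (v + w) = act p v + act p w"
  by (simp add: act_def Dpow_add scaleR_add_right sum.distrib)

lemma act_scale_v: "v \<in> V \<Longrightarrow> act p (c *\<^sub>R v) = c *\<^sub>R act p v"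
  by (simp add: act_def Dpow_scale scaleR_sum_right mult.commute)

lemma act_zero_v [simp]: "act p 0 = 0"
  by (simp add: act_def Dpow_zero)

lemma act_neg_v: "v \<in> V \<Longrightarrow> act p (- v) = - act p v"
  using act_scale_v[of v p "-1"] by simp

lemma act_diff_v: "v \<in> V \<Longrightarrow> w \<in> V \<Longrightarrow> act p (v - w) = act p v - act p w"
  using act_add_v[of v "-w" p] act_neg_v[of w p] Vneg by simp

lemma act_pCons: "v \<in> V \<Longrightarrow> act (pCons a p) v = a *\<^sub>R v + D (act p v)"
proof -
  assume v: "v \<in> V"
  have "act (pCons a p) v = (\<Sum>i\<le>Suc (degree p). coeff (pCons a p) i *\<^sub>R (D ^^ i) v)"
    by (rule act_ext) (simp add: degree_pCons_le)
  also have "\<dots> = a *\<^sub>R v + (\<Sum>i\<le>degree p. coeff p i *\<^sub>R D ((D ^^ i) v))"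
    by (subst sum.atMost_Suc_shift) simp
  also have "(\<Sum>i\<le>degree p. coeff p i *\<^sub>R D ((D ^^ i) v)) = D (act p v)"
    unfolding act_def using v by (subst Dsum) (auto intro!: Vscale Dpow_V simp: Dscale Dpow_V)
  finally show ?thesis .
qed

lemma act_mult: "v \<in> V \<Longrightarrow> act (p * q) v = act p (act q v)"
proof (induction p rule: pCons_induct)
  case 0 then show ?case by simp
next
  case (pCons a p)
  have "act (pCons a p * q) v = act (smult a q + pCons 0 (p * q)) v" by simp
  also have "\<dots> = a *\<^sub>R act q v + D (act (p * q) v)"
    using pCons by (simp add: act_add_poly act_smult act_pCons)
  also have "\<dots> = act (pCons a p) (act q v)"
    using pCons by (simp add: act_pCons act_V)
  finally show ?case .
qed

lemma act_times2: "act (p * 2) v = 2 *\<^sub>R act p v"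
  by (simp add: numeral_poly act_smult)

lemma act_const: "act [:c:] v = c *\<^sub>R v"
  by (simp add: act_def)

lemma act_1: "act 1 v = v"
  by (simp add: act_def)

lemma act_monom: "act (monom c i) v = c *\<^sub>R (D ^^ i) v"
proof -
  have "act (monom c i) v = (\<Sum>k\<le>i. coeff (monom c i) k *\<^sub>R (D ^^ k) v)"
    by (rule act_ext) (simp add: degree_monom_le)
  also have "\<dots> = (\<Sum>k\<le>i. if k = i then c *\<^sub>R (D ^^ k) v else 0)"
    by (rule sum.cong) auto
  also have "\<dots> = c *\<^sub>R (D ^^ i) v" by simp
  finally show ?thesis .
qed

lemma act_X: "v \<in> V \<Longrightarrow> act pX v = D v"
  using act_pCons[of v 0 "[:1:]"] act_const[of 1 v] by simp

lemma act_comm: "v \<in> V \<Longrightarrow> act p (act q v) = act q (act p v)"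
  by (metis act_mult mult.commute)

lemma unit_lemma:
  assumes "u \<in> V" "act p u = 0" "poly p 0 \<noteq> 0" "act (pX ^ N) u = 0"
  shows "u = 0"
  using assms(4)
proof (induction N)
  case 0 then show ?case by (simp add: act_1)
next
  case (Suc N)
  obtain c r where p: "p = pCons c r" by (cases p rule: pCons_cases)
  have c: "c \<noteq> 0" using assms(3) p by simp
  define w where "w = act (pX ^ N) u"
  have wV: "w \<in> V" using assms(1) by (simp add: w_def act_V)
  have Xw: "act pX w = 0"
    using Suc.prems assms(1) by (simp add: w_def act_mult[symmetric] mult.commute)
  have Dw: "D w = 0" using Xw act_X[OF wV] by simp
  have "act p w = act (pX ^ N) (act p u)" using assms(1) by (simp add: w_def act_comm)
  then have "act p w = 0" using assms(2) by simp
  moreover have "act p w = c *\<^sub>R w + D (act r w)" using p wV by (simp add: act_pCons)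
  moreover have "D (act r w) = act r (D w)"
    using wV act_X[of "act r w"] act_X[OF wV] act_comm[OF wV, of pX r] act_V[OF wV] by simp
  ultimately have "c *\<^sub>R w = 0" using Dw by simp
  then have "w = 0" using c by simp
  then show ?case using Suc.IH w_def by simp
qed

definition Mop :: "'v \<times> 'v \<Rightarrow> 'v \<times> 'v" where
  "Mop pq = (D (snd pq), D (fst pq) + 2 *\<^sub>R snd pq)"

lemma Mop_pow: "P \<in> V \<Longrightarrow> Q \<in> V \<Longrightarrow>
   (Mop ^^ k) (P, Q) = (act (ma k) P + act (mb k) Q, act (mc k) P + act (md k) Q)"
proof (induction k)
  case 0 then show ?case by (simp add: act_1)
next
  case (Suc k)
  have e: "D (act q R) = act (pX * q) R" if "R \<in> V" for q R
    using that by (simp add: act_pCons)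
  show ?case using Suc
    by (simp add: Mop_def Dadd act_V e act_add_poly act_smult act_scale_v scaleR_add_right act_times2
        algebra_simps del: mult_pCons_left)
qed

end


definition gp :: "nat \<Rightarrow> real poly" where
  "gp n = (\<Sum>k\<in>{1..n}. monom (cc k) (2 * k - 1))"

lemma coeff_gp: "coeff (gp n) i = (if odd i \<and> i < 2 * n then cc (Suc i div 2) else 0)"
proof -
  have "coeff (gp n) i = (\<Sum>k\<in>{1..n}. if 2 * k - 1 = i then cc k else 0)"
    by (simp add: gp_def coeff_sum)
  also have "\<dots> = (\<Sum>k\<in>{1..n}. if k = Suc i div 2 \<and> odd i then cc k else 0)"
    by (rule sum.cong) auto
  also have "\<dots> = (if odd i \<and> i < 2 * n then cc (Suc i div 2) else 0)"
  proof (cases "odd i")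
    case True
    then have "(Suc i div 2 \<in> {1..n}) = (i < 2 * n)" by (auto elim!: oddE)
    then show ?thesis using True by (simp add: sum.delta')
  qed simp
  finally show ?thesis .
qed

lemma monom_1_pX: "monom (1::real) k = pX ^ k"
  by (induction k) (simp_all add: monom_Suc)

lemma sum_even_zero:
  fixes f :: "nat \<Rightarrow> real" and K :: nat
  assumes "\<And>i. even i \<Longrightarrow> f i = (0::real)"
  shows "(\<Sum>i\<le>2 * K. f i) = (\<Sum>a<K. f (2 * a + 1))"
proof (induction K)
  case 0 then show ?case using assms by simp
next
  case (Suc K)
  have "(\<Sum>i\<le>2 * Suc K. f i) = (\<Sum>i\<le>2 * K. f i) + f (2 * K + 1) + f (2 * K + 2)"
    by (simp add: atMost_Suc)
  then show ?case using Suc assms by simp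
qed

lemma E_dvd: "pX ^ (2 * n + 1) dvd (pX + 2 * gp n - pX * gp n ^ 2)"
proof -
  let ?g = "gp n"
  have "\<forall>j<2 * n + 1. coeff (pX + 2 * ?g - pX * ?g ^ 2) j = 0"
  proof (intro allI impI)
    fix j assume j: "j < 2 * n + 1"
    show "coeff (pX + 2 * ?g - pX * ?g ^ 2) j = 0"
    proof (cases j)
      case 0 then show ?thesis by (simp add: coeff_gp numeral_poly)
    next
      case (Suc J)
      have c1: "coeff pX (Suc J) = (if J = 0 then 1 else 0)" by (cases J) simp_all
      have c2: "coeff (2 * ?g) (Suc J) = 2 * coeff ?g (Suc J)" by (simp add: numeral_poly)
      have c3: "coeff (pX * ?g ^ 2) (Suc J) = (\<Sum>i\<le>J. coeff ?g i * coeff ?g (J - i))"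
        by (simp add: power2_eq_square coeff_mult)
      have c: "coeff (pX + 2 * ?g - pX * ?g ^ 2) (Suc J)
          = (if J = 0 then 1 else 0) + 2 * coeff ?g (Suc J) - (\<Sum>i\<le>J. coeff ?g i * coeff ?g (J - i))"
        by (simp only: coeff_diff coeff_add c1 c2 c3)
      show ?thesis
      proof (cases "even J")
        case False
        have "(\<Sum>i\<le>J. coeff ?g i * coeff ?g (J - i)) = 0"
        proof (rule sum.neutral, rule ballI)
          fix i assume "i \<in> {..J}"
          then have "even i \<or> even (J - i)" using False by auto
          then show "coeff ?g i * coeff ?g (J - i) = 0" by (auto simp: coeff_gp)
        qed
        moreover have "coeff ?g (Suc J) = 0" using False by (simp add: coeff_gp)
        moreover have "J \<noteq> 0" using False by (metis even_zero)
        ultimately show ?thesis unfolding Suc c by simp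
      next
        case True
        then obtain K where K: "J = 2 * K" by (auto elim: evenE)
        have Kn: "K < n" using j Suc K by simp
        have "(\<Sum>i\<le>J. coeff ?g i * coeff ?g (J - i)) = (\<Sum>a<K. coeff ?g (2 * a + 1) * coeff ?g (J - (2 * a + 1)))"
          unfolding K by (rule sum_even_zero) (simp add: coeff_gp)
        also have "\<dots> = (\<Sum>a<K. cc (Suc a) * cc (K - a))"
        proof (rule sum.cong[OF refl])
          fix a assume a: "a \<in> {..<K}"
          have "J - (2 * a + 1) = 2 * (K - a - 1) + 1" using a K by auto
          moreover have "Suc (2 * (K - a - 1) + 1) div 2 = K - a" using a by auto
          ultimately show "coeff ?g (2 * a + 1) * coeff ?g (J - (2 * a + 1)) = cc (Suc a) * cc (K - a)"
            using a Kn by (simp add: coeff_gp)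
        qed
        finally have s: "(\<Sum>i\<le>J. coeff ?g i * coeff ?g (J - i)) = (\<Sum>a<K. cc (Suc a) * cc (K - a))" .
        have cg: "coeff ?g (Suc J) = cc (Suc K)" using K Kn by (simp add: coeff_gp)
        show ?thesis
        proof (cases "K = 0")
          case True
          then show ?thesis unfolding Suc c s cg using K cc1 by simp
        next
          case False
          have "2 * cc (Suc K) = (\<Sum>k\<in>{1..<Suc K}. cc k * cc (Suc K - k))"
            using False by (intro cc_quad) simp
          also have "\<dots> = (\<Sum>a<K. cc (Suc a) * cc (K - a))"
          proof -
            have "{1..<Suc K} = Suc ` {..<K}" by (simp add: image_Suc_lessThan atLeastLessThanSuc_atLeastAtMost)
            then show ?thesis by (simp add: sum.reindex)
          qed
          finally show ?thesis unfolding Suc c s cg using K False by simp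
        qed
      qed
    qed
  qed
  then have "monom 1 (2 * n + 1) dvd (pX + 2 * ?g - pX * ?g ^ 2)"
    by (simp add: monom_1_dvd_iff')
  then show ?thesis by (simp add: monom_1_pX)
qed

lemma gp_X: "pX dvd gp n"
  unfolding gp_def
proof (rule dvd_sum)
  fix k assume "k \<in> {1..n}"
  then have "monom (cc k) (2 * k - 1) = pX * monom (cc k) (2 * k - 2)"
    by (cases k) (auto simp: monom_Suc)
  then show "pX dvd monom (cc k) (2 * k - 1)" by (metis dvd_triv_left)
qed

lemma xy_dvd:
  fixes n k :: nat
  defines "g \<equiv> gp n" and "Z \<equiv> pX ^ (2 * n + 1)"
  shows "Z dvd (ma k + mb k * g - (pX * g) ^ k) \<and> Z dvd (mc k + md k * g - (pX * g) ^ k * g)"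
proof (induction k)
  case 0 then show ?case by simp
next
  case (Suc k)
  have e1: "ma (Suc k) + mb (Suc k) * g - (pX * g) ^ Suc k = pX * (mc k + md k * g - (pX * g) ^ k * g)"
    by (simp add: algebra_simps)
  have e2: "mc (Suc k) + md (Suc k) * g - (pX * g) ^ Suc k * g
     = pX * (ma k + mb k * g - (pX * g) ^ k) + 2 * (mc k + md k * g - (pX * g) ^ k * g)
       + (pX * g) ^ k * (pX + 2 * g - pX * g ^ 2)"
    by (simp add: algebra_simps power2_eq_square)
  have E: "Z dvd (pX + 2 * g - pX * g ^ 2)" unfolding Z_def g_def by (rule E_dvd)
  show ?case using Suc unfolding e1 e2
    by (intro conjI dvd_add dvd_mult E) auto
qed

lemma xy_final:
  shows "pX ^ (2 * n) dvd (ma n + mb n * gp n) \<and> pX ^ (2 * n) dvd (mc n + md n * gp n)"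
proof -
  obtain r where r: "gp n = pX * r" using gp_X[of n] by (rule dvdE)
  have "(pX * gp n) ^ n = (pX ^ 2 * r) ^ n" by (simp add: r power2_eq_square mult.assoc)
  also have "\<dots> = pX ^ (2 * n) * r ^ n" by (simp only: power_mult_distrib power_mult)
  finally have h: "(pX * gp n) ^ n = pX ^ (2 * n) * r ^ n" .
  have Z: "pX ^ (2 * n) dvd pX ^ (2 * n + 1)" by (rule le_imp_power_dvd) simp
  from xy_dvd[of n n] have
    "pX ^ (2 * n) dvd (ma n + mb n * gp n - (pX * gp n) ^ n)"
    "pX ^ (2 * n) dvd (mc n + md n * gp n - (pX * gp n) ^ n * gp n)"
    using Z dvd_trans by blast+
  moreover have "pX ^ (2 * n) dvd (pX * gp n) ^ n" "pX ^ (2 * n) dvd (pX * gp n) ^ n * gp n"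
    unfolding h by simp_all
  ultimately show ?thesis
    by (metis diff_add_cancel dvd_add)
qed

context dmod
begin

lemma fwd_part:
  assumes A: "A \<in> V" and z: "act (pX ^ (2 * n)) A = 0"
  shows "(Mop ^^ n) (A, act (gp n) A) = (0, 0)"
proof -
  have 1: "act (ma n + mb n * gp n) A = 0"
  proof -
    obtain q where "ma n + mb n * gp n = pX ^ (2 * n) * q" using xy_final[of n] by (metis dvdE)
    then show ?thesis using A z by (simp add: mult.commute act_mult)
  qed
  have 2: "act (mc n + md n * gp n) A = 0"
  proof -
    obtain q where "mc n + md n * gp n = pX ^ (2 * n) * q" using xy_final[of n] by (metis dvdE)
    then show ?thesis using A z by (simp add: mult.commute act_mult)
  qed
  show ?thesis using 1 2 A
    by (simp add: Mop_pow act_V act_mult act_add_poly)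
qed

lemma neg1_pow: "(-1::real poly)^n = [:(-1)^n:]" by (induction n) simp_all

lemma pow_neg_sq: "(- (pX ^ 2)) ^ n = smult ((-1) ^ n) (pX ^ (2 * n))"
proof -
  have "(- (pX ^ 2)) ^ n = (-1)^n * (pX^2)^n" by (rule power_minus)
  also have "\<dots> = smult ((-1) ^ n) (pX ^ (2 * n))" by (simp only: neg1_pow power_mult) simp
  finally show ?thesis .
qed

theorem alg_main:
  assumes A: "A \<in> V" and B: "B \<in> V"
  shows "(Mop ^^ n) (A, B) = (0, 0) \<longleftrightarrow> act (pX ^ (2 * n)) A = 0 \<and> B = act (gp n) A"
proof
  assume "act (pX ^ (2 * n)) A = 0 \<and> B = act (gp n) A"
  then show "(Mop ^^ n) (A, B) = (0, 0)" using fwd_part A by auto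
next
  assume M: "(Mop ^^ n) (A, B) = (0, 0)"
  let ?a = "ma n" and ?b = "mb n" and ?c = "mc n" and ?d = "md n"
  have Y1: "act ?a A + act ?b B = 0" and Y2: "act ?c A + act ?d B = 0"
    using M A B by (simp_all add: Mop_pow)
  have "act ?d (act ?a A + act ?b B) - act ?b (act ?c A + act ?d B)
     = act (?d * ?a) A + act (?d * ?b) B - (act (?b * ?c) A + act (?b * ?d) B)"
    using A B by (simp only: act_add_v act_V act_mult)
  also have "\<dots> = act (?a * ?d - ?b * ?c) A" by (simp add: act_diff_poly mult.commute)
  finally have "act ?d (act ?a A + act ?b B) - act ?b (act ?c A + act ?d B) = act (?a * ?d - ?b * ?c) A" .
  then have "act ((- (pX ^ 2)) ^ n) A = 0" using Y1 Y2 by (simp add: m_det)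
  then have zA: "act (pX ^ (2 * n)) A = 0" by (simp add: pow_neg_sq act_smult)
  have "act ?a (act ?c A + act ?d B) - act ?c (act ?a A + act ?b B)
     = act (?a * ?c) A + act (?a * ?d) B - (act (?c * ?a) A + act (?c * ?b) B)"
    using A B by (simp only: act_add_v act_V act_mult)
  also have "\<dots> = act (?a * ?d - ?b * ?c) B" by (simp add: act_diff_poly mult.commute)
  finally have "act ?a (act ?c A + act ?d B) - act ?c (act ?a A + act ?b B) = act (?a * ?d - ?b * ?c) B" .
  then have "act ((- (pX ^ 2)) ^ n) B = 0" using Y1 Y2 by (simp add: m_det)
  then have zB: "act (pX ^ (2 * n)) B = 0" by (simp add: pow_neg_sq act_smult)
  define u where "u = B - act (gp n) A"
  have uV: "u \<in> V" using A B by (simp add: u_def Vdiff act_V)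
  have F: "(Mop ^^ n) (A, act (gp n) A) = (0, 0)" by (rule fwd_part[OF A zA])
  then have "act ?c A + act ?d (act (gp n) A) = 0" using A by (simp add: Mop_pow act_V)
  then have "act ?d B = act ?d (act (gp n) A)" using Y2 by (metis add_left_cancel)
  then have du: "act ?d u = 0" using A B by (simp add: u_def act_diff_v act_V)
  have "act (pX ^ (2 * n)) u = act (pX ^ (2 * n)) B - act (gp n) (act (pX ^ (2 * n)) A)"
    using A B by (simp add: u_def act_diff_v act_V act_comm)
  then have Xu: "act (pX ^ (2 * n)) u = 0" using zA zB by simp
  have "u = 0" by (rule unit_lemma[OF uV du _ Xu]) (simp add: md_0)
  then show "act (pX ^ (2 * n)) A = 0 \<and> B = act (gp n) A" using zA by (simp add: u_def)
qed

end


definition sg :: "nat \<Rightarrow> nat set \<Rightarrow> real" where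
  "sg j C = (-1) ^ (card {b\<in>C. b < j} + (if j \<in> C then 0 else 1))"

lemma symd_single: "symd {j} C = (if j \<in> C then C - {j} else insert j C)"
  by (auto simp: symd_def)

lemma symd_empty [simp]: "symd {} C = C" by (auto simp: symd_def)
lemma symd_invol [simp]: "symd {j} (symd {j} C) = C" by (auto simp: symd_def)
lemma symd_comm: "symd {i} (symd {j} C) = symd {j} (symd {i} C)" by (auto simp: symd_def)
lemma symd_sub: "C \<subseteq> {1..m} \<Longrightarrow> j \<in> {1..m} \<Longrightarrow> symd {j} C \<subseteq> {1..m}"
  by (auto simp: symd_def)
lemma symd_sub_iff: "j \<in> {1..m} \<Longrightarrow> symd {j} C \<subseteq> {1..m} \<longleftrightarrow> C \<subseteq> {1..m}"
  by (auto simp: symd_def)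

lemma csign_empty [simp]: "csign {} B = 1"
  by (simp add: csign_def)

lemma csign_single: "csign {j} B = (-1) ^ (card {b\<in>B. b < j} + (if j \<in> B then 1 else 0))"
proof -
  have "{(a, b). a \<in> {j} \<and> b \<in> B \<and> b < a} = (\<lambda>b. (j, b)) ` {b\<in>B. b < j}" by auto
  moreover have "card ((\<lambda>b. (j, b)) ` {b\<in>B. b < j}) = card {b\<in>B. b < j}"
    by (rule card_image) (auto simp: inj_on_def)
  moreover have "card ({j} \<inter> B) = (if j \<in> B then 1 else 0)" by auto
  ultimately show ?thesis by (simp add: csign_def)
qed

lemma csign_sg: "csign {j} (symd {j} C) = sg j C"
proof -
  have "{b \<in> symd {j} C. b < j} = {b\<in>C. b < j}" by (auto simp: symd_def)
  moreover have "(j \<in> symd {j} C) = (j \<notin> C)" by (auto simp: symd_def)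
  ultimately show ?thesis by (simp add: csign_single sg_def)
qed

lemma sg_sq: "sg j C * sg j C = 1"
  by (simp add: sg_def power_add[symmetric] power_mult_distrib[symmetric])

lemma sg_self: "sg j (symd {j} C) = - sg j C"
proof -
  have "{b \<in> symd {j} C. b < j} = {b\<in>C. b < j}" by (auto simp: symd_def)
  moreover have "(j \<in> symd {j} C) = (j \<notin> C)" by (auto simp: symd_def)
  ultimately show ?thesis by (simp add: sg_def)
qed

lemma sg_other: assumes "i \<noteq> j"
  shows "sg j (symd {i} C) = (if i < j then - sg j C else sg j C)"
proof -
  have mem: "(j \<in> symd {i} C) = (j \<in> C)" using assms by (auto simp: symd_def)
  let ?S = "{b\<in>C. b < j}"
  have fin: "finite ?S" by (rule finite_subset[of _ "{..<j}"]) auto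
  show ?thesis
  proof (cases "i < j")
    case False
    then have "{b \<in> symd {i} C. b < j} = ?S" by (auto simp: symd_def)
    then show ?thesis using False mem by (simp add: sg_def)
  next
    case True
    show ?thesis
    proof (cases "i \<in> C")
      case iC: True
      then have e: "{b \<in> symd {i} C. b < j} = ?S - {i}" using True by (auto simp: symd_def)
      have "i \<in> ?S" using iC True by auto
      then have "card ?S = Suc (card (?S - {i}))" by (rule card_Suc_Diff1[OF fin, symmetric])
      then show ?thesis using True mem e by (simp add: sg_def)
    next
      case iC: False
      then have e: "{b \<in> symd {i} C. b < j} = insert i ?S" using True by (auto simp: symd_def)
      have "card (insert i ?S) = Suc (card ?S)" using fin iC by simp
      then show ?thesis using True mem e by (simp add: sg_def)
    qed
  qed
qed

lemma clmul_basis: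
  assumes j: "j \<in> {1..m}"
  shows "clmul m (basis j) u C = (if C \<subseteq> {1..m} then sg j C * u (symd {j} C) else 0)"
proof -
  have "(\<Sum>A\<in>Pow {1..m}. csign A (symd A C) * basis j A * u (symd A C))
      = (\<Sum>A\<in>Pow {1..m}. if A = {j} then sg j C * u (symd {j} C) else 0)"
    by (rule sum.cong) (auto simp: basis_def csign_sg)
  also have "\<dots> = sg j C * u (symd {j} C)" using j by (simp add: sum.delta')
  finally show ?thesis by (simp add: clmul_def)
qed

definition wv :: "real \<Rightarrow> real \<Rightarrow> mvec" where
  "wv a b = (\<lambda>C. if C = {} then a else if C = {1} then b else 0)"

lemma exp_z_wv: "exp_z x = wv (exp (x 0) * cos (x 1)) (exp (x 0) * sin (x 1))"
  unfolding exp_z_def wv_def by (rule refl)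

lemma exp_zbar_wv: "exp_zbar x = wv (exp (x 0) * cos (x 1)) (- (exp (x 0) * sin (x 1)))"
  unfolding exp_zbar_def wv_def by (rule refl)

lemma clmul_wv:
  assumes m: "1 \<le> m"
  shows "clmul m (wv a b) u C = (if C \<subseteq> {1..m} then a * u C + b * sg 1 C * u (symd {1} C) else 0)"
proof -
  have "(\<Sum>A\<in>Pow {1..m}. csign A (symd A C) * wv a b A * u (symd A C))
      = (\<Sum>A\<in>Pow {1..m}. (if A = {} then a * u C else 0) + (if A = {1} then b * sg 1 C * u (symd {1} C) else 0))"
    by (rule sum.cong) (auto simp: wv_def csign_sg)
  also have "\<dots> = a * u C + b * sg 1 C * u (symd {1} C)" using m by (simp add: sum.distrib sum.delta')
  finally show ?thesis by (simp add: clmul_def)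
qed

lemma EE_same:
  assumes "j \<in> {1..m}" "C \<subseteq> {1..m}"
  shows "clmul m (basis j) (clmul m (basis j) u) C = - u C"
proof -
  have s: "symd {j} C \<subseteq> {1..m}" using assms symd_sub by auto
  show ?thesis using assms s sg_sq[of j C]
    by (simp add: clmul_basis sg_self)
qed

lemma EE_anti:
  assumes "i \<in> {1..m}" "j \<in> {1..m}" "i \<noteq> j"
  shows "clmul m (basis i) (clmul m (basis j) u) C = - clmul m (basis j) (clmul m (basis i) u) C"
proof (cases "C \<subseteq> {1..m}")
  case True
  have s: "symd {i} C \<subseteq> {1..m}" "symd {j} C \<subseteq> {1..m}" using True assms symd_sub by auto
  show ?thesis using assms True s
    by (cases "i < j") (auto simp: clmul_basis symd_comm sg_other)
qed (use assms in \<open>simp add: clmul_basis\<close>)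

lemma EW:
  assumes m: "2 \<le> m" and j: "j \<in> {2..m}"
  shows "clmul m (basis j) (clmul m (wv a b) u) C = clmul m (wv a (- b)) (clmul m (basis j) u) C"
proof -
  have j1: "j \<in> {1..m}" "j \<noteq> 1" "1 < j" using j by auto
  show ?thesis
  proof (cases "C \<subseteq> {1..m}")
    case True
    have s: "symd {1} C \<subseteq> {1..m}" "symd {j} C \<subseteq> {1..m}" using True j1 m symd_sub by auto
    show ?thesis using m j1 True s
      by (simp add: clmul_basis clmul_wv symd_comm sg_other algebra_simps)
  qed (use m j1 in \<open>simp add: clmul_basis clmul_wv\<close>)
qed


lemma iterpd_Nil [simp]: "iterpd [] f = f" by (simp add: iterpd_def)
lemma iterpd_Cons: "iterpd (j # js) f = pdx j (iterpd js f)" by (simp add: iterpd_def)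
lemma iterpd_snoc: "iterpd (js @ [j]) f = iterpd js (pdx j f)" by (simp add: iterpd_def)

lemma smooth_diffble:
  "smooth_cl m F \<Longrightarrow> set js \<subseteq> {0..m} \<Longrightarrow> j \<in> {0..m} \<Longrightarrow>
   (\<lambda>t. iterpd js F (x(j := t)) C) differentiable (at (x j))"
  unfolding smooth_cl_def by blast

lemma smooth_cont:
  "smooth_cl m F \<Longrightarrow> set js \<subseteq> {0..m} \<Longrightarrow> continuous_on UNIV (\<lambda>x. iterpd js F x C)"
  unfolding smooth_cl_def by blast

lemma deriv_lin:
  fixes f :: "'i \<Rightarrow> real \<Rightarrow> real" and a :: "'i \<Rightarrow> real"
  assumes "finite I" "\<forall>i\<in>I. (\<lambda>t. f i t) differentiable (at s)"
  shows "deriv (\<lambda>t. \<Sum>i\<in>I. a i * f i t) s = (\<Sum>i\<in>I. a i * deriv (f i) s)"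
proof -
  have "((\<lambda>t. \<Sum>i\<in>I. a i * f i t) has_real_derivative (\<Sum>i\<in>I. a i * deriv (f i) s)) (at s)"
  proof (rule DERIV_sum)
    fix i assume "i \<in> I"
    then have "(f i has_real_derivative deriv (f i) s) (at s)"
      using assms(2) DERIV_deriv_iff_real_differentiable by blast
    then show "((\<lambda>t. a i * f i t) has_real_derivative a i * deriv (f i) s) (at s)"
      by (rule DERIV_cmult)
  qed
  then show ?thesis by (rule DERIV_imp_deriv)
qed

lemma iterpd_lin:
  assumes fin: "finite I" and sm: "\<forall>i\<in>I. smooth_cl m (F i)" and js: "set js \<subseteq> {0..m}"
  shows "iterpd js (\<lambda>x C. \<Sum>i\<in>I. a i C * F i x (\<sigma> i C))
       = (\<lambda>x C. \<Sum>i\<in>I. a i C * iterpd js (F i) x (\<sigma> i C))"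
  using js
proof (induction js)
  case Nil then show ?case by simp
next
  case (Cons j js)
  then have j: "j \<in> {0..m}" and js': "set js \<subseteq> {0..m}" by auto
  have "iterpd (j # js) (\<lambda>x C. \<Sum>i\<in>I. a i C * F i x (\<sigma> i C))
      = pdx j (\<lambda>x C. \<Sum>i\<in>I. a i C * iterpd js (F i) x (\<sigma> i C))"
    using Cons js' by (simp add: iterpd_Cons)
  also have "\<dots> = (\<lambda>x C. \<Sum>i\<in>I. a i C * iterpd (j # js) (F i) x (\<sigma> i C))"
  proof (intro ext)
    fix x C
    have "pdx j (\<lambda>x C. \<Sum>i\<in>I. a i C * iterpd js (F i) x (\<sigma> i C)) x C
       = deriv (\<lambda>t. \<Sum>i\<in>I. a i C * iterpd js (F i) (x(j := t)) (\<sigma> i C)) (x j)"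
      by (simp add: pdx_def)
    also have "\<dots> = (\<Sum>i\<in>I. a i C * deriv (\<lambda>t. iterpd js (F i) (x(j := t)) (\<sigma> i C)) (x j))"
      by (rule deriv_lin[OF fin]) (use sm js' j smooth_diffble in blast)
    also have "\<dots> = (\<Sum>i\<in>I. a i C * iterpd (j # js) (F i) x (\<sigma> i C))"
      by (simp add: iterpd_Cons pdx_def)
    finally show "pdx j (\<lambda>x C. \<Sum>i\<in>I. a i C * iterpd js (F i) x (\<sigma> i C)) x C
       = (\<Sum>i\<in>I. a i C * iterpd (j # js) (F i) x (\<sigma> i C))" .
  qed
  finally show ?case .
qed

lemma smooth_lin:
  assumes fin: "finite I" and sm: "\<forall>i\<in>I. smooth_cl m (F i)"
  shows "smooth_cl m (\<lambda>x C. \<Sum>i\<in>I. a i C * F i x (\<sigma> i C))"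
  unfolding smooth_cl_def
proof (intro allI impI conjI ballI)
  fix js :: "nat list" and C assume js: "set js \<subseteq> {0..m}"
  show "continuous_on UNIV (\<lambda>x. iterpd js (\<lambda>x C. \<Sum>i\<in>I. a i C * F i x (\<sigma> i C)) x C)"
    unfolding iterpd_lin[OF fin sm js]
    by (intro continuous_on_sum continuous_on_mult continuous_on_const)
      (use sm js smooth_cont in blast)
next
  fix js :: "nat list" and j x C assume js: "set js \<subseteq> {0..m}" and j: "j \<in> {0..m}"
  show "(\<lambda>t. iterpd js (\<lambda>x C. \<Sum>i\<in>I. a i C * F i x (\<sigma> i C)) (x(j := t)) C) differentiable at (x j)"
    unfolding iterpd_lin[OF fin sm js]
    by (intro differentiable_sum[OF fin] ballI differentiable_mult differentiable_const)
      (use sm js j smooth_diffble in blast)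
qed

lemma smooth_pdx: "smooth_cl m F \<Longrightarrow> j \<in> {0..m} \<Longrightarrow> smooth_cl m (pdx j F)"
proof -
  assume F: "smooth_cl m F" and j: "j \<in> {0..m}"
  show ?thesis unfolding smooth_cl_def
  proof (intro allI impI conjI ballI)
    fix js :: "nat list" and C assume js: "set js \<subseteq> {0..m}"
    have js': "set (js @ [j]) \<subseteq> {0..m}" using js j by simp
    show "continuous_on UNIV (\<lambda>x. iterpd js (pdx j F) x C)"
      using smooth_cont[OF F js', of C] by (simp only: iterpd_snoc)
  next
    fix js :: "nat list" and i x C assume js: "set js \<subseteq> {0..m}" and i: "i \<in> {0..m}"
    have js': "set (js @ [j]) \<subseteq> {0..m}" using js j by simp
    show "(\<lambda>t. iterpd js (pdx j F) (x(i := t)) C) differentiable at (x i)"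
      using smooth_diffble[OF F js' i, of x C] by (simp only: iterpd_snoc)
  qed
qed

lemma smooth_add: "smooth_cl m F \<Longrightarrow> smooth_cl m G \<Longrightarrow> smooth_cl m (F + G)"
proof -
  assume F: "smooth_cl m F" and G: "smooth_cl m G"
  have "F + G = (\<lambda>x C. \<Sum>i\<in>{0::nat, 1}. 1 * (if i = 0 then F else G) x C)"
    by (simp add: fun_eq_iff)
  moreover have "smooth_cl m (\<lambda>x C. \<Sum>i\<in>{0::nat, 1}. 1 * (if i = 0 then F else G) x C)"
    by (rule smooth_lin) (use F G in auto)
  ultimately show ?thesis by simp
qed

lemma smooth_scale: "smooth_cl m F \<Longrightarrow> smooth_cl m (c *\<^sub>R F)"
proof -
  assume F: "smooth_cl m F"
  have "c *\<^sub>R F = (\<lambda>x C. \<Sum>i\<in>{0::nat}. c * F x C)"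
    by (simp add: fun_eq_iff)
  moreover have "smooth_cl m (\<lambda>x C. \<Sum>i\<in>{0::nat}. c * F x C)"
    by (rule smooth_lin) (use F in auto)
  ultimately show ?thesis by simp
qed

lemma smooth_zero: "smooth_cl m 0"
proof -
  have "(0 :: point \<Rightarrow> mvec) = (\<lambda>x C. \<Sum>i\<in>({}::nat set). 1 * (0 :: point \<Rightarrow> mvec) x C)"
    by (simp add: fun_eq_iff)
  moreover have "smooth_cl m (\<lambda>x C. \<Sum>i\<in>({}::nat set). 1 * (0 :: point \<Rightarrow> mvec) x C)"
    by (rule smooth_lin) auto
  ultimately show ?thesis by simp
qed

lemma pdx_add: "smooth_cl m F \<Longrightarrow> smooth_cl m G \<Longrightarrow> j \<in> {0..m} \<Longrightarrow> pdx j (F + G) = pdx j F + pdx j G"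
proof -
  assume F: "smooth_cl m F" and G: "smooth_cl m G" and j: "j \<in> {0..m}"
  have "F + G = (\<lambda>x C. \<Sum>i\<in>{0::nat, 1}. 1 * (if i = 0 then F else G) x C)"
    by (simp add: fun_eq_iff)
  then have "pdx j (F + G) = iterpd [j] (\<lambda>x C. \<Sum>i\<in>{0::nat, 1}. 1 * (if i = 0 then F else G) x C)"
    by (simp add: iterpd_Cons)
  also have "\<dots> = (\<lambda>x C. \<Sum>i\<in>{0::nat, 1}. 1 * iterpd [j] (if i = 0 then F else G) x C)"
    by (rule iterpd_lin) (use F G j in auto)
  finally show ?thesis by (simp add: fun_eq_iff iterpd_Cons)
qed

lemma pdx_scale: "smooth_cl m F \<Longrightarrow> j \<in> {0..m} \<Longrightarrow> pdx j (c *\<^sub>R F) = c *\<^sub>R pdx j F"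
proof -
  assume F: "smooth_cl m F" and j: "j \<in> {0..m}"
  have "c *\<^sub>R F = (\<lambda>x C. \<Sum>i\<in>{0::nat}. c * F x C)"
    by (simp add: fun_eq_iff)
  then have "pdx j (c *\<^sub>R F) = iterpd [j] (\<lambda>x C. \<Sum>i\<in>{0::nat}. c * F x C)"
    by (simp add: iterpd_Cons)
  also have "\<dots> = (\<lambda>x C. \<Sum>i\<in>{0::nat}. c * iterpd [j] F x C)"
    by (rule iterpd_lin) (use F j in auto)
  finally show ?thesis by (simp add: fun_eq_iff iterpd_Cons)
qed

lemma dep_add: "depends_only S F \<Longrightarrow> depends_only S G \<Longrightarrow> depends_only S (F + G)"
  unfolding depends_only_def
proof (intro allI impI)
  fix x x' :: point
  assume F: "\<forall>x x'. (\<forall>j\<in>S. x j = x' j) \<longrightarrow> F x = F x'"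
    and G: "\<forall>x x'. (\<forall>j\<in>S. x j = x' j) \<longrightarrow> G x = G x'" and xx: "\<forall>j\<in>S. x j = x' j"
  have "F x = F x'" "G x = G x'" using F G xx by blast+
  then show "(F + G) x = (F + G) x'" by simp
qed

lemma dep_scale: "depends_only S F \<Longrightarrow> depends_only S (c *\<^sub>R F)"
  unfolding depends_only_def
proof (intro allI impI)
  fix x x' :: point
  assume F: "\<forall>x x'. (\<forall>j\<in>S. x j = x' j) \<longrightarrow> F x = F x'" and xx: "\<forall>j\<in>S. x j = x' j"
  have "F x = F x'" using F xx by blast
  then show "(c *\<^sub>R F) x = (c *\<^sub>R F) x'" by simp
qed

lemma dirac_y_formula:
  "dirac_y m F = (\<lambda>x C. \<Sum>j\<in>{2..m}. (if C \<subseteq> {1..m} then sg j C else 0) * pdx j F x (symd {j} C))"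
  by (rule ext, rule ext) (auto simp: dirac_y_def clmul_basis intro!: sum.cong)

lemma smooth_dirac_y: "smooth_cl m F \<Longrightarrow> smooth_cl m (dirac_y m F)"
  unfolding dirac_y_formula by (rule smooth_lin) (auto intro: smooth_pdx)

lemma dirac_y_add: "smooth_cl m F \<Longrightarrow> smooth_cl m G \<Longrightarrow> dirac_y m (F + G) = dirac_y m F + dirac_y m G"
  unfolding dirac_y_formula by (auto simp: fun_eq_iff pdx_add sum.distrib algebra_simps)

lemma dirac_y_scale: "smooth_cl m F \<Longrightarrow> dirac_y m (c *\<^sub>R F) = c *\<^sub>R dirac_y m F"
  unfolding dirac_y_formula by (auto simp: fun_eq_iff pdx_scale sum_distrib_left algebra_simps)

lemma pdx_dep: "depends_only S F \<Longrightarrow> j \<in> S \<Longrightarrow> depends_only S (pdx j F)"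
  unfolding depends_only_def pdx_def
proof (intro allI impI)
  fix x x' :: point
  assume F: "\<forall>x x'. (\<forall>j\<in>S. x j = x' j) \<longrightarrow> F x = F x'" and j: "j \<in> S" and xx: "\<forall>j\<in>S. x j = x' j"
  have "\<And>t. F (x(j := t)) = F (x'(j := t))" using F xx by auto
  moreover have "x j = x' j" using xx j by auto
  ultimately show "(\<lambda>C. deriv (\<lambda>t. F (x(j := t)) C) (x j)) = (\<lambda>C. deriv (\<lambda>t. F (x'(j := t)) C) (x' j))"
    by simp
qed

lemma dirac_y_dep: "depends_only {2..m} F \<Longrightarrow> depends_only {2..m} (dirac_y m F)"
proof -
  assume F: "depends_only {2..m} F"
  have "\<And>j. j \<in> {2..m} \<Longrightarrow> depends_only {2..m} (pdx j F)" using F pdx_dep by blast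
  then show ?thesis unfolding depends_only_def dirac_y_def
  proof (intro allI impI)
    fix x x' :: point
    assume H: "\<And>j. j \<in> {2..m} \<Longrightarrow> \<forall>x x'. (\<forall>j\<in>{2..m}. x j = x' j) \<longrightarrow> pdx j F x = pdx j F x'"
      and xx: "\<forall>j\<in>{2..m}. x j = x' j"
    have "\<And>j. j \<in> {2..m} \<Longrightarrow> pdx j F x = pdx j F x'" using H xx by blast
    then show "(\<lambda>C. \<Sum>j = 2..m. clmul m (basis j) (pdx j F x) C) =
        (\<lambda>C. \<Sum>j = 2..m. clmul m (basis j) (pdx j F x') C)" by (intro ext sum.cong refl) simp
  qed
qed

definition Vm :: "nat \<Rightarrow> (point \<Rightarrow> mvec) set" where
  "Vm m = {F. smooth_cl m F \<and> (\<forall>x. cl_valued m (F x)) \<and> depends_only {2..m} F}"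

lemma dmod_Vm: "dmod (Vm m) (dirac_y m)"
proof
  show "0 \<in> Vm m" by (simp add: Vm_def smooth_zero cl_valued_def depends_only_def)
next
  fix F G assume "F \<in> Vm m" "G \<in> Vm m"
  then show "F + G \<in> Vm m" by (auto simp: Vm_def smooth_add cl_valued_def dep_add)
next
  fix F and c :: real assume "F \<in> Vm m"
  then show "c *\<^sub>R F \<in> Vm m" by (auto simp: Vm_def smooth_scale cl_valued_def dep_scale)
next
  fix F assume F: "F \<in> Vm m"
  have "\<forall>x. cl_valued m (dirac_y m F x)" by (auto simp: cl_valued_def dirac_y_formula)
  then show "dirac_y m F \<in> Vm m" using F by (auto simp: Vm_def smooth_dirac_y dirac_y_dep)
next
  fix F G assume "F \<in> Vm m" "G \<in> Vm m"
  then show "dirac_y m (F + G) = dirac_y m F + dirac_y m G" by (auto simp: Vm_def dirac_y_add)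
next
  fix F and c :: real assume "F \<in> Vm m"
  then show "dirac_y m (c *\<^sub>R F) = c *\<^sub>R dirac_y m F" by (auto simp: Vm_def dirac_y_scale)
qed


definition Phi :: "nat \<Rightarrow> (point \<Rightarrow> mvec) \<Rightarrow> (point \<Rightarrow> mvec) \<Rightarrow> point \<Rightarrow> mvec" where
  "Phi m P Q = (\<lambda>x. cladd (clmul m (exp_z x) (P x)) (clmul m (exp_zbar x) (Q x)))"

lemma Phi_formula:
  assumes "1 \<le> m"
  shows "Phi m P Q x C = (if C \<subseteq> {1..m} then
      exp (x 0) * cos (x 1) * (P x C + Q x C)
      + exp (x 0) * sin (x 1) * (sg 1 C * (P x (symd {1} C) - Q x (symd {1} C))) else 0)"
  using assms by (simp add: Phi_def cladd_def exp_z_wv exp_zbar_wv clmul_wv algebra_simps)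

lemma dep_const: "depends_only {2..m} P \<Longrightarrow> j \<notin> {2..m} \<Longrightarrow> P (x(j := t)) = P x"
  unfolding depends_only_def by auto

lemma pdx0_Phi:
  assumes m: "1 \<le> m" and P: "depends_only {2..m} P" and Q: "depends_only {2..m} Q"
  shows "pdx 0 (Phi m P Q) x C = Phi m P Q x C"
proof -
  define K where "K = (if C \<subseteq> {1..m} then cos (x 1) * (P x C + Q x C)
      + sin (x 1) * (sg 1 C * (P x (symd {1} C) - Q x (symd {1} C))) else 0)"
  have e: "Phi m P Q (x(0 := t)) C = exp t * K" for t
    using m dep_const[OF P, of 0 x t] dep_const[OF Q, of 0 x t]
    by (simp add: Phi_formula K_def algebra_simps)
  have "((\<lambda>t. exp t * K) has_real_derivative exp (x 0) * K) (at (x 0))"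
    by (auto intro!: derivative_eq_intros)
  then have "deriv (\<lambda>t. Phi m P Q (x(0 := t)) C) (x 0) = exp (x 0) * K"
    unfolding e by (rule DERIV_imp_deriv)
  moreover have "Phi m P Q x C = exp (x 0) * K"
    using e[of "x 0"] by simp
  ultimately show ?thesis by (simp add: pdx_def)
qed

lemma pdx1_Phi:
  assumes m: "2 \<le> m" and P: "depends_only {2..m} P" and Q: "depends_only {2..m} Q"
  shows "pdx 1 (Phi m P Q) x C = (if C \<subseteq> {1..m} then
      - exp (x 0) * sin (x 1) * (P x C + Q x C)
      + exp (x 0) * cos (x 1) * (sg 1 C * (P x (symd {1} C) - Q x (symd {1} C))) else 0)"
proof -
  define U where "U = P x C + Q x C"
  define W where "W = sg 1 C * (P x (symd {1} C) - Q x (symd {1} C))"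
  define c where "c = (if C \<subseteq> {1..m} then 1 else (0::real))"
  have e: "Phi m P Q (x(1 := t)) C = c * (exp (x 0) * cos t * U + exp (x 0) * sin t * W)" for t
    using m dep_const[OF P, of 1 x t] dep_const[OF Q, of 1 x t]
    by (simp add: Phi_formula U_def W_def c_def)
  have "((\<lambda>t. c * (exp (x 0) * cos t * U + exp (x 0) * sin t * W)) has_real_derivative
       c * (- exp (x 0) * sin (x 1) * U + exp (x 0) * cos (x 1) * W)) (at (x 1))"
    by (auto intro!: derivative_eq_intros simp: algebra_simps)
  then have "deriv (\<lambda>t. Phi m P Q (x(1 := t)) C) (x 1) = c * (- exp (x 0) * sin (x 1) * U + exp (x 0) * cos (x 1) * W)"
    unfolding e by (rule DERIV_imp_deriv)
  then show ?thesis by (simp add: pdx_def c_def U_def W_def)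
qed

lemma pdxj_Phi:
  assumes m: "1 \<le> m" and j: "j \<in> {2..m}"
    and P: "\<And>x C. (\<lambda>t. P (x(j := t)) C) differentiable (at (x j))"
    and Q: "\<And>x C. (\<lambda>t. Q (x(j := t)) C) differentiable (at (x j))"
  shows "pdx j (Phi m P Q) = Phi m (pdx j P) (pdx j Q)"
proof (intro ext)
  fix x C
  have j0: "j \<noteq> 0" "j \<noteq> 1" using j by auto
  have dP: "((\<lambda>t. P (x(j := t)) D) has_real_derivative pdx j P x D) (at (x j))" for D
    using P[of x D] DERIV_deriv_iff_real_differentiable by (simp add: pdx_def)
  have dQ: "((\<lambda>t. Q (x(j := t)) D) has_real_derivative pdx j Q x D) (at (x j))" for D
    using Q[of x D] DERIV_deriv_iff_real_differentiable by (simp add: pdx_def)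
  define c where "c = (if C \<subseteq> {1..m} then 1 else (0::real))"
  let ?a = "exp (x 0) * cos (x 1)" and ?b = "exp (x 0) * sin (x 1)"
  have e: "Phi m P Q (x(j := t)) C = c * (?a * (P (x(j := t)) C + Q (x(j := t)) C)
      + ?b * (sg 1 C * (P (x(j := t)) (symd {1} C) - Q (x(j := t)) (symd {1} C))))" for t
    using m j0 by (simp add: Phi_formula c_def)
  have "((\<lambda>t. c * (?a * (P (x(j := t)) C + Q (x(j := t)) C)
      + ?b * (sg 1 C * (P (x(j := t)) (symd {1} C) - Q (x(j := t)) (symd {1} C)))))
     has_real_derivative c * (?a * (pdx j P x C + pdx j Q x C)
      + ?b * (sg 1 C * (pdx j P x (symd {1} C) - pdx j Q x (symd {1} C))))) (at (x j))"
    by (intro DERIV_cmult DERIV_add DERIV_diff dP dQ)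
  then have "deriv (\<lambda>t. Phi m P Q (x(j := t)) C) (x j) = c * (?a * (pdx j P x C + pdx j Q x C)
      + ?b * (sg 1 C * (pdx j P x (symd {1} C) - pdx j Q x (symd {1} C))))"
    unfolding e by (rule DERIV_imp_deriv)
  then show "pdx j (Phi m P Q) x C = Phi m (pdx j P) (pdx j Q) x C"
    using m by (simp add: pdx_def Phi_formula c_def)
qed

lemma sg_cases: "sg j C = 1 \<or> sg j C = -1"
  unfolding sg_def by (metis minus_one_power_iff)

lemma clmul_add2: "clmul m w (u + v) = clmul m w u + clmul m w v"
  by (auto simp: clmul_def fun_eq_iff sum.distrib algebra_simps)

lemma clmul_scale2: "clmul m w (c *\<^sub>R u) = c *\<^sub>R clmul m w u"
  by (auto simp: clmul_def fun_eq_iff sum_distrib_left algebra_simps)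

lemma clmul_zero2: "clmul m w 0 = 0"
  by (auto simp: clmul_def fun_eq_iff)

lemma clmul_sum2: "clmul m w (\<Sum>j\<in>S. f j) = (\<Sum>j\<in>S. clmul m w (f j))"
  apply (induction S rule: infinite_finite_induct)
    apply (metis sum.infinite clmul_zero2)
   apply (simp only: sum.empty clmul_zero2)
  apply (metis sum.insert clmul_add2)
  done

lemma EW_z:
  assumes "2 \<le> m" "j \<in> {2..m}"
  shows "clmul m (basis j) (clmul m (exp_z x) u) = clmul m (exp_zbar x) (clmul m (basis j) u)"
  using EW[OF assms] by (auto simp: exp_z_wv exp_zbar_wv)

lemma EW_zbar:
  assumes "2 \<le> m" "j \<in> {2..m}"
  shows "clmul m (basis j) (clmul m (exp_zbar x) u) = clmul m (exp_z x) (clmul m (basis j) u)"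
  by (rule ext) (use EW[OF assms, of "exp (x 0) * cos (x 1)" "- (exp (x 0) * sin (x 1))"] in
      \<open>simp add: exp_z_wv exp_zbar_wv\<close>)

lemma dirac_y_sum: "dirac_y m P x = (\<Sum>j\<in>{2..m}. clmul m (basis j) (pdx j P x))"
  by (simp add: dirac_y_def fun_eq_iff sum_fun_apply)

lemma Phi_plus: "Phi m P Q x = clmul m (exp_z x) (P x) + clmul m (exp_zbar x) (Q x)"
  by (simp add: Phi_def cladd_def fun_eq_iff)

lemma first_part:
  assumes m: "2 \<le> m" and P: "depends_only {2..m} P" and Q: "depends_only {2..m} Q"
  shows "pdx 0 (Phi m P Q) x C + clmul m (basis 1) (pdx 1 (Phi m P Q) x) C
       = 2 * clmul m (exp_zbar x) (Q x) C"
proof (cases "C \<subseteq> {1..m}")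
  case True
  have C1: "symd {1} C \<subseteq> {1..m}" using True m symd_sub by auto
  have m1: "1 \<le> m" "1 \<in> {1..m}" using m by auto
  have e0: "pdx 0 (Phi m P Q) x C = Phi m P Q x C" by (rule pdx0_Phi[OF m1(1) P Q])
  have e1: "clmul m (basis 1) (pdx 1 (Phi m P Q) x) C = sg 1 C * pdx 1 (Phi m P Q) x (symd {1} C)"
    using True m1 by (simp only: clmul_basis if_True)
  have e2: "pdx 1 (Phi m P Q) x (symd {1} C) = - exp (x 0) * sin (x 1) * (P x (symd {1} C) + Q x (symd {1} C))
      + exp (x 0) * cos (x 1) * (sg 1 (symd {1} C) * (P x C - Q x C))"
    using C1 by (simp only: pdx1_Phi[OF m P Q] if_True symd_invol)
  have e3: "Phi m P Q x C = exp (x 0) * cos (x 1) * (P x C + Q x C)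
      + exp (x 0) * sin (x 1) * (sg 1 C * (P x (symd {1} C) - Q x (symd {1} C)))"
    using True m1 by (simp only: Phi_formula if_True)
  have e4: "clmul m (exp_zbar x) (Q x) C = exp (x 0) * cos (x 1) * Q x C
      + - (exp (x 0) * sin (x 1)) * sg 1 C * Q x (symd {1} C)"
    using True m1 by (simp only: exp_zbar_wv clmul_wv if_True)
  show ?thesis unfolding e0 e1 e2 e3 e4 sg_self using sg_cases[of 1 C]
    by (auto simp: algebra_simps)
next
  case False
  have m1: "1 \<le> m" "1 \<in> {1..m}" using m by auto
  then show ?thesis using False
    by (simp add: pdx0_Phi[OF _ P Q] Phi_formula clmul_basis exp_zbar_wv clmul_wv)
qed

lemma dirac_Phi:
  assumes m: "2 \<le> m" and P: "P \<in> Vm m" and Q: "Q \<in> Vm m"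
  shows "dirac m (Phi m P Q) = Phi m (dirac_y m Q) (dirac_y m P + 2 *\<^sub>R Q)"
proof (intro ext)
  fix x C
  have Ps: "smooth_cl m P" and Pd: "depends_only {2..m} P" using P by (auto simp: Vm_def)
  have Qs: "smooth_cl m Q" and Qd: "depends_only {2..m} Q" using Q by (auto simp: Vm_def)
  have dP: "\<And>x C. (\<lambda>t. P (x(j := t)) C) differentiable (at (x j))" if "j \<in> {2..m}" for j
    using smooth_diffble[OF Ps, of "[]" j] that by auto
  have dQ: "\<And>x C. (\<lambda>t. Q (x(j := t)) C) differentiable (at (x j))" if "j \<in> {2..m}" for j
    using smooth_diffble[OF Qs, of "[]" j] that by auto
  have split: "{1..m} = insert 1 {2..m}" using m by auto
  have "(\<Sum>j\<in>{2..m}. clmul m (basis j) (pdx j (Phi m P Q) x) C)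
      = (\<Sum>j\<in>{2..m}. clmul m (exp_zbar x) (clmul m (basis j) (pdx j P x)) C
                     + clmul m (exp_z x) (clmul m (basis j) (pdx j Q x)) C)"
  proof (rule sum.cong[OF refl])
    fix j assume j: "j \<in> {2..m}"
    have "pdx j (Phi m P Q) x = clmul m (exp_z x) (pdx j P x) + clmul m (exp_zbar x) (pdx j Q x)"
      using pdxj_Phi[of m j P Q] m j dP[OF j] dQ[OF j] by (simp add: Phi_plus)
    then show "clmul m (basis j) (pdx j (Phi m P Q) x) C
      = clmul m (exp_zbar x) (clmul m (basis j) (pdx j P x)) C
        + clmul m (exp_z x) (clmul m (basis j) (pdx j Q x)) C"
      using EW_z[OF m j] EW_zbar[OF m j] by (simp add: clmul_add2)
  qed
  also have "\<dots> = clmul m (exp_zbar x) (dirac_y m P x) C + clmul m (exp_z x) (dirac_y m Q x) C"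
    by (simp add: dirac_y_sum clmul_sum2 sum_fun_apply sum.distrib)
  finally have J: "(\<Sum>j\<in>{2..m}. clmul m (basis j) (pdx j (Phi m P Q) x) C)
      = clmul m (exp_zbar x) (dirac_y m P x) C + clmul m (exp_z x) (dirac_y m Q x) C" .
  have "dirac m (Phi m P Q) x C = pdx 0 (Phi m P Q) x C + clmul m (basis 1) (pdx 1 (Phi m P Q) x) C
      + (\<Sum>j\<in>{2..m}. clmul m (basis j) (pdx j (Phi m P Q) x) C)"
    by (unfold dirac_def split) (simp add: sum.insert)
  also have "\<dots> = 2 * clmul m (exp_zbar x) (Q x) C
      + clmul m (exp_zbar x) (dirac_y m P x) C + clmul m (exp_z x) (dirac_y m Q x) C"
    using first_part[OF m Pd Qd, of x C] J by simp
  also have "\<dots> = Phi m (dirac_y m Q) (dirac_y m P + 2 *\<^sub>R Q) x C"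
    by (simp add: Phi_plus clmul_add2 clmul_scale2)
  finally show "dirac m (Phi m P Q) x C = Phi m (dirac_y m Q) (dirac_y m P + 2 *\<^sub>R Q) x C" .
qed


lemma Phi_zero_iff:
  assumes m: "2 \<le> m" and P: "P \<in> Vm m" and Q: "Q \<in> Vm m"
  shows "(\<forall>x. Phi m P Q x = (\<lambda>C. 0)) \<longleftrightarrow> P = 0 \<and> Q = 0"
proof
  assume "P = 0 \<and> Q = 0"
  then show "\<forall>x. Phi m P Q x = (\<lambda>C. 0)" using m by (auto simp: Phi_formula)
next
  assume Z: "\<forall>x. Phi m P Q x = (\<lambda>C. 0)"
  have Pd: "depends_only {2..m} P" and Qd: "depends_only {2..m} Q"
    and Pc: "\<And>x. cl_valued m (P x)" and Qc: "\<And>x. cl_valued m (Q x)"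
    using P Q by (auto simp: Vm_def)
  have m1: "1 \<le> m" using m by simp
  have both: "P y C = 0 \<and> Q y C = 0" for y C
  proof (cases "C \<subseteq> {1..m}")
    case False
    then show ?thesis using Pc Qc by (simp add: cl_valued_def)
  next
    case True
    define x0 where "x0 = y(0 := 0, 1 := 0)"
    define x1 where "x1 = y(0 := 0, 1 := pi / 2)"
    have Px0: "P x0 = P y" "Q x0 = Q y" unfolding x0_def
      using dep_const[OF Pd] dep_const[OF Qd] by auto
    have Px1: "P x1 = P y" "Q x1 = Q y" unfolding x1_def
      using dep_const[OF Pd] dep_const[OF Qd] by auto
    have "Phi m P Q x0 C = 0" using Z by simp
    then have s: "P y C + Q y C = 0" using True m1 Px0 by (simp add: Phi_formula x0_def)
    have C1: "symd {1} C \<subseteq> {1..m}" using True m1 symd_sub by auto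
    have "Phi m P Q x1 (symd {1} C) = 0" using Z by simp
    then have "sg 1 (symd {1} C) * (P y C - Q y C) = 0"
      using C1 m1 Px1 by (simp add: Phi_formula x1_def)
    moreover have "sg 1 (symd {1} C) \<noteq> 0" using sg_cases[of 1 "symd {1} C"] by auto
    ultimately have "P y C = Q y C" by simp
    then show ?thesis using s by simp
  qed
  then show "P = 0 \<and> Q = 0" by (auto simp: fun_eq_iff)
qed

lemma dirac_iter:
  assumes m: "2 \<le> m"
  shows "P \<in> Vm m \<Longrightarrow> Q \<in> Vm m \<Longrightarrow> (dirac m ^^ k) (Phi m P Q)
     = Phi m (fst ((dmod.Mop (dirac_y m) ^^ k) (P, Q))) (snd ((dmod.Mop (dirac_y m) ^^ k) (P, Q)))"
proof (induction k arbitrary: P Q)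
  case 0 then show ?case by simp
next
  case (Suc k)
  interpret D: dmod "Vm m" "dirac_y m" by (rule dmod_Vm)
  have V: "dirac_y m Q \<in> Vm m" "dirac_y m P + 2 *\<^sub>R Q \<in> Vm m"
    using Suc.prems by (auto intro: D.DV D.Vadd D.Vscale)
  have "(dirac m ^^ Suc k) (Phi m P Q) = (dirac m ^^ k) (dirac m (Phi m P Q))"
    by (simp only: funpow_Suc_right comp_apply)
  also have "\<dots> = (dirac m ^^ k) (Phi m (dirac_y m Q) (dirac_y m P + 2 *\<^sub>R Q))"
    using dirac_Phi[OF m Suc.prems] by simp
  also have "\<dots> = Phi m (fst ((D.Mop ^^ k) (dirac_y m Q, dirac_y m P + 2 *\<^sub>R Q)))
                        (snd ((D.Mop ^^ k) (dirac_y m Q, dirac_y m P + 2 *\<^sub>R Q)))"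
    by (rule Suc.IH[OF V])
  also have "(D.Mop ^^ k) (dirac_y m Q, dirac_y m P + 2 *\<^sub>R Q) = (D.Mop ^^ Suc k) (P, Q)"
    by (simp only: funpow_Suc_right comp_apply D.Mop_def fst_conv snd_conv)
  finally show ?case .
qed


lemma dist_pair_le: "dist (a::real, b::real) (c, d) \<le> \<bar>a - c\<bar> + \<bar>b - d\<bar>"
proof -
  have "dist (a, b) (c, d) = sqrt ((dist a c)\<^sup>2 + (dist b d)\<^sup>2)" by (rule dist_Pair_Pair)
  also have "\<dots> \<le> \<bar>dist a c\<bar> + \<bar>dist b d\<bar>" by (rule sqrt_sum_squares_le_sum_abs)
  also have "\<dots> = \<bar>a - c\<bar> + \<bar>b - d\<bar>" by (simp add: dist_real_def)
  finally show ?thesis .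
qed

lemma clairaut:
  fixes f f1 f2 f12 f21 :: "real \<Rightarrow> real \<Rightarrow> real"
  assumes f1: "\<And>s t. ((\<lambda>s. f s t) has_real_derivative f1 s t) (at s)"
      and f2: "\<And>s t. ((\<lambda>t. f s t) has_real_derivative f2 s t) (at t)"
      and f12: "\<And>s t. ((\<lambda>t. f1 s t) has_real_derivative f12 s t) (at t)"
      and f21: "\<And>s t. ((\<lambda>s. f2 s t) has_real_derivative f21 s t) (at s)"
      and c12: "continuous_on UNIV (\<lambda>p. f12 (fst p) (snd p))"
      and c21: "continuous_on UNIV (\<lambda>p. f21 (fst p) (snd p))"
  shows "f12 s0 t0 = f21 s0 t0"
proof -
  have approx: "\<exists>\<xi> \<eta> \<xi>' \<eta>'. \<bar>\<xi> - s0\<bar> < h \<and> \<bar>\<eta> - t0\<bar> < h \<and> \<bar>\<xi>' - s0\<bar> < h \<and> \<bar>\<eta>' - t0\<bar> < h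
      \<and> f12 \<xi> \<eta> = f21 \<xi>' \<eta>'" if h: "h > 0" for h
  proof -
    define \<Delta> where "\<Delta> = f (s0 + h) (t0 + h) - f (s0 + h) t0 - f s0 (t0 + h) + f s0 t0"
    have der1: "\<And>x. s0 \<le> x \<Longrightarrow> x \<le> s0 + h \<Longrightarrow>
        ((\<lambda>s. f s (t0 + h) - f s t0) has_real_derivative (f1 x (t0 + h) - f1 x t0)) (at x)"
      by (intro DERIV_diff f1)
    have der3: "\<And>x. t0 \<le> x \<Longrightarrow> x \<le> t0 + h \<Longrightarrow>
        ((\<lambda>t. f (s0 + h) t - f s0 t) has_real_derivative (f2 (s0 + h) x - f2 s0 x)) (at x)"
      by (intro DERIV_diff f2)
    obtain \<xi> where \<xi>: "s0 < \<xi>" "\<xi> < s0 + h"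
      and e1: "(f (s0 + h) (t0 + h) - f (s0 + h) t0) - (f s0 (t0 + h) - f s0 t0)
             = (s0 + h - s0) * (f1 \<xi> (t0 + h) - f1 \<xi> t0)"
      using MVT2[of s0 "s0 + h" "\<lambda>s. f s (t0 + h) - f s t0" "\<lambda>s. f1 s (t0 + h) - f1 s t0", OF _ der1] h
        by auto
    obtain \<eta> where \<eta>: "t0 < \<eta>" "\<eta> < t0 + h"
      and e2: "f1 \<xi> (t0 + h) - f1 \<xi> t0 = (t0 + h - t0) * f12 \<xi> \<eta>"
      using MVT2[of t0 "t0 + h" "\<lambda>t. f1 \<xi> t" "\<lambda>t. f12 \<xi> t"] h f12 by auto
    obtain \<eta>' where \<eta>': "t0 < \<eta>'" "\<eta>' < t0 + h"
      and e3: "(f (s0 + h) (t0 + h) - f s0 (t0 + h)) - (f (s0 + h) t0 - f s0 t0)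
             = (t0 + h - t0) * (f2 (s0 + h) \<eta>' - f2 s0 \<eta>')"
      using MVT2[of t0 "t0 + h" "\<lambda>t. f (s0 + h) t - f s0 t" "\<lambda>t. f2 (s0 + h) t - f2 s0 t", OF _ der3] h
        by auto
    obtain \<xi>' where \<xi>': "s0 < \<xi>'" "\<xi>' < s0 + h"
      and e4: "f2 (s0 + h) \<eta>' - f2 s0 \<eta>' = (s0 + h - s0) * f21 \<xi>' \<eta>'"
      using MVT2[of s0 "s0 + h" "\<lambda>s. f2 s \<eta>'" "\<lambda>s. f21 s \<eta>'"] h f21 by auto
    have "\<Delta> = h * (h * f12 \<xi> \<eta>)" using e1 e2 by (simp add: \<Delta>_def algebra_simps)
    moreover have "\<Delta> = h * (h * f21 \<xi>' \<eta>')" using e3 e4 by (simp add: \<Delta>_def algebra_simps)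
    ultimately have "f12 \<xi> \<eta> = f21 \<xi>' \<eta>'" using h by simp
    then show ?thesis using \<xi> \<eta> \<xi>' \<eta>' by (intro exI[of _ \<xi>] exI[of _ \<eta>] exI[of _ \<xi>'] exI[of _ \<eta>']) auto
  qed
  show ?thesis
  proof (rule ccontr)
    assume ne: "f12 s0 t0 \<noteq> f21 s0 t0"
    define e where "e = \<bar>f12 s0 t0 - f21 s0 t0\<bar> / 2"
    have e: "e > 0" using ne by (simp add: e_def)
    have "isCont (\<lambda>p. f12 (fst p) (snd p)) (s0, t0)"
      using c12 continuous_on_eq_continuous_at by blast
    then obtain d1 where d1: "d1 > 0" "\<And>p. dist p (s0, t0) < d1 \<Longrightarrow> dist (f12 (fst p) (snd p)) (f12 s0 t0) < e"
      using e unfolding continuous_at_eps_delta by fastforce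
    have "isCont (\<lambda>p. f21 (fst p) (snd p)) (s0, t0)"
      using c21 continuous_on_eq_continuous_at by blast
    then obtain d2 where d2: "d2 > 0" "\<And>p. dist p (s0, t0) < d2 \<Longrightarrow> dist (f21 (fst p) (snd p)) (f21 s0 t0) < e"
      using e unfolding continuous_at_eps_delta by fastforce
    define h where "h = min d1 d2 / 2"
    have h: "h > 0" using d1 d2 by (simp add: h_def)
    obtain \<xi> \<eta> \<xi>' \<eta>' where a: "\<bar>\<xi> - s0\<bar> < h" "\<bar>\<eta> - t0\<bar> < h" "\<bar>\<xi>' - s0\<bar> < h" "\<bar>\<eta>' - t0\<bar> < h"
      and eq: "f12 \<xi> \<eta> = f21 \<xi>' \<eta>'"
      using approx[OF h] by blast
    have "dist (\<xi>, \<eta>) (s0, t0) < d1"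
      using dist_pair_le[of \<xi> \<eta> s0 t0] a h_def d2 by linarith
    then have 1: "\<bar>f12 \<xi> \<eta> - f12 s0 t0\<bar> < e" using d1(2)[of "(\<xi>, \<eta>)"] by (simp add: dist_real_def)
    have "dist (\<xi>', \<eta>') (s0, t0) < d2"
      using dist_pair_le[of \<xi>' \<eta>' s0 t0] a h_def d1 by linarith
    then have 2: "\<bar>f21 \<xi>' \<eta>' - f21 s0 t0\<bar> < e" using d2(2)[of "(\<xi>', \<eta>')"] by (simp add: dist_real_def)
    have tri: "\<bar>A - B\<bar> \<le> \<bar>a - A\<bar> + \<bar>a - B\<bar>" for a A B :: real by arith
    have "\<bar>f12 s0 t0 - f21 s0 t0\<bar> < 2 * e"
      using tri[of "f12 \<xi> \<eta>" "f12 s0 t0" "f21 s0 t0"] 1 2 eq by linarith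
    then show False using e_def by simp
  qed
qed


lemma smooth_DERIV:
  assumes F: "smooth_cl m F" and js: "set js \<subseteq> {0..m}" and k: "k \<in> {0..m}"
  shows "((\<lambda>t. iterpd js F (y(k := t)) C) has_real_derivative iterpd (k # js) F y C) (at (y k))"
proof -
  have "(\<lambda>t. iterpd js F (y(k := t)) C) differentiable (at (y k))" by (rule smooth_diffble[OF F js k])
  then show ?thesis using DERIV_deriv_iff_real_differentiable by (simp add: iterpd_Cons pdx_def)
qed

lemma pdx_comm:
  assumes F: "smooth_cl m F" and i: "i \<in> {0..m}" and j: "j \<in> {0..m}"
  shows "pdx j (pdx i F) = pdx i (pdx j F)"
proof (cases "i = j")
  case False
  show ?thesis
  proof (intro ext)
    fix x C
    let ?y = "\<lambda>(s::real) (t::real). x(i := s, j := t)"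
    define f where "f s t = F (?y s t) C" for s t
    define f1 where "f1 s t = pdx i F (?y s t) C" for s t
    define f2 where "f2 s t = pdx j F (?y s t) C" for s t
    define f12 where "f12 s t = pdx j (pdx i F) (?y s t) C" for s t
    define f21 where "f21 s t = pdx i (pdx j F) (?y s t) C" for s t
    have yi: "(?y s t)(i := \<sigma>) = ?y \<sigma> t" for s t \<sigma> using False by (simp add: fun_upd_twist)
    have yj: "(?y s t)(j := \<tau>) = ?y s \<tau>" for s t \<tau> by simp
    have yi': "?y s t i = s" for s t using False by simp
    have yj': "?y s t j = t" for s t by simp
    have d1: "((\<lambda>s. f s t) has_real_derivative f1 s t) (at s)" for s t
      using smooth_DERIV[OF F, of "[]" i "?y s t" C] i unfolding yi yi' by (simp add: f_def f1_def iterpd_Cons)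
    have d2: "((\<lambda>t. f s t) has_real_derivative f2 s t) (at t)" for s t
      using smooth_DERIV[OF F, of "[]" j "?y s t" C] j unfolding yj yj' by (simp add: f_def f2_def iterpd_Cons)
    have d12: "((\<lambda>t. f1 s t) has_real_derivative f12 s t) (at t)" for s t
      using smooth_DERIV[OF F, of "[i]" j "?y s t" C] i j unfolding yj yj' by (simp add: f1_def f12_def iterpd_Cons)
    have d21: "((\<lambda>s. f2 s t) has_real_derivative f21 s t) (at s)" for s t
      using smooth_DERIV[OF F, of "[j]" i "?y s t" C] i j unfolding yi yi' by (simp add: f2_def f21_def iterpd_Cons)
    have cy: "continuous_on UNIV (\<lambda>p::real \<times> real. ?y (fst p) (snd p))"
    proof (rule continuous_on_coordinatewise_then_product)
      fix k
      show "continuous_on UNIV (\<lambda>p::real \<times> real. ?y (fst p) (snd p) k)"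
        by (cases "k = j"; cases "k = i") (auto intro: continuous_intros)
    qed
    have c12: "continuous_on UNIV (\<lambda>p. f12 (fst p) (snd p))"
    proof -
      have "continuous_on UNIV (\<lambda>y. iterpd [j, i] F y C)" by (rule smooth_cont[OF F]) (use i j in auto)
      then have "continuous_on UNIV ((\<lambda>y. iterpd [j, i] F y C) \<circ> (\<lambda>p::real \<times> real. ?y (fst p) (snd p)))"
        using cy continuous_on_compose continuous_on_subset by blast
      then show ?thesis by (simp add: f12_def iterpd_Cons comp_def)
    qed
    have c21: "continuous_on UNIV (\<lambda>p. f21 (fst p) (snd p))"
    proof -
      have "continuous_on UNIV (\<lambda>y. iterpd [i, j] F y C)" by (rule smooth_cont[OF F]) (use i j in auto)
      then have "continuous_on UNIV ((\<lambda>y. iterpd [i, j] F y C) \<circ> (\<lambda>p::real \<times> real. ?y (fst p) (snd p)))"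
        using cy continuous_on_compose continuous_on_subset by blast
      then show ?thesis by (simp add: f21_def iterpd_Cons comp_def)
    qed
    have "f12 (x i) (x j) = f21 (x i) (x j)"
      by (rule clairaut[OF d1 d2 d12 d21 c12 c21])
    then show "pdx j (pdx i F) x C = pdx i (pdx j F) x C" by (simp add: f12_def f21_def)
  qed
qed simp

lemma pdx_cl: "(\<And>x. cl_valued m (F x)) \<Longrightarrow> cl_valued m (pdx j F x)"
  unfolding cl_valued_def pdx_def by simp

lemma lap_DD:
  assumes m: "2 \<le> m" and F: "F \<in> Vm m"
  shows "lap m F = - dirac_y m (dirac_y m F)"
proof (intro ext)
  fix x C
  have Fs: "smooth_cl m F" and Fc: "\<And>x. cl_valued m (F x)" using F by (auto simp: Vm_def)
  let ?I = "{2..m}"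
  define T where "T i j = clmul m (basis i) (clmul m (basis j) (pdx i (pdx j F) x)) C" for i j
  have pd: "pdx i (dirac_y m F) = (\<lambda>x. \<Sum>j\<in>?I. clmul m (basis j) (pdx i (pdx j F) x))" if i: "i \<in> ?I" for i
  proof -
    have "pdx i (dirac_y m F) = iterpd [i] (\<lambda>x C. \<Sum>j\<in>?I. (if C \<subseteq> {1..m} then sg j C else 0) * pdx j F x (symd {j} C))"
      by (simp add: iterpd_Cons dirac_y_formula)
    also have "\<dots> = (\<lambda>x C. \<Sum>j\<in>?I. (if C \<subseteq> {1..m} then sg j C else 0) * iterpd [i] (pdx j F) x (symd {j} C))"
      by (rule iterpd_lin) (use i Fs in \<open>auto intro: smooth_pdx\<close>)
    also have "\<dots> = (\<lambda>x. \<Sum>j\<in>?I. clmul m (basis j) (pdx i (pdx j F) x))"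
    proof (intro ext)
      fix x C
      show "(\<Sum>j\<in>?I. (if C \<subseteq> {1..m} then sg j C else 0) * iterpd [i] (pdx j F) x (symd {j} C))
          = (\<Sum>j\<in>?I. clmul m (basis j) (pdx i (pdx j F) x)) C"
        unfolding sum_fun_apply
      proof (rule sum.cong[OF refl])
        fix j assume "j \<in> ?I"
        then have j1: "j \<in> {1..m}" by auto
        show "(if C \<subseteq> {1..m} then sg j C else 0) * iterpd [i] (pdx j F) x (symd {j} C)
            = clmul m (basis j) (pdx i (pdx j F) x) C"
          by (simp add: clmul_basis[OF j1] iterpd_Cons)
      qed
    qed
    finally show ?thesis .
  qed
  have DD: "dirac_y m (dirac_y m F) x C = (\<Sum>i\<in>?I. \<Sum>j\<in>?I. T i j)"
  proof -
    have "dirac_y m (dirac_y m F) x C = (\<Sum>i\<in>?I. clmul m (basis i) (pdx i (dirac_y m F) x) C)"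
      by (simp add: dirac_y_def)
    also have "\<dots> = (\<Sum>i\<in>?I. \<Sum>j\<in>?I. T i j)"
      by (rule sum.cong[OF refl]) (simp add: pd clmul_sum2 sum_fun_apply T_def)
    finally show ?thesis .
  qed
  have anti: "T i j = - T j i" if "i \<in> ?I" "j \<in> ?I" "i \<noteq> j" for i j
  proof -
    have "pdx j (pdx i F) = pdx i (pdx j F)" by (rule pdx_comm[OF Fs]) (use that in auto)
    then show ?thesis using EE_anti[of i m j] that by (simp add: T_def)
  qed
  define S where "S = (\<Sum>i\<in>?I. \<Sum>j\<in>?I. if i = j then 0 else T i j)"
  have "S = (\<Sum>j\<in>?I. \<Sum>i\<in>?I. if i = j then 0 else T i j)" unfolding S_def by (rule sum.swap)
  also have "\<dots> = (\<Sum>j\<in>?I. \<Sum>i\<in>?I. - (if j = i then 0 else T j i))"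
  proof (rule sum.cong[OF refl], rule sum.cong[OF refl])
    fix j i assume "j \<in> ?I" "i \<in> ?I"
    then show "(if i = j then 0 else T i j) = - (if j = i then 0 else T j i)"
      using anti[of i j] by (cases "i = j") simp_all
  qed
  also have "\<dots> = - S" by (simp add: S_def sum_negf)
  finally have S0: "S = 0" by simp
  have "(\<Sum>i\<in>?I. \<Sum>j\<in>?I. T i j) = (\<Sum>i\<in>?I. \<Sum>j\<in>?I. (if i = j then T i i else 0) + (if i = j then 0 else T i j))"
    by (intro sum.cong refl) auto
  also have "\<dots> = (\<Sum>i\<in>?I. T i i) + S" by (simp add: sum.distrib S_def)
  finally have split: "(\<Sum>i\<in>?I. \<Sum>j\<in>?I. T i j) = (\<Sum>i\<in>?I. T i i)" using S0 by simp
  have diag: "T i i = - pdx i (pdx i F) x C" if i: "i \<in> ?I" for i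
  proof (cases "C \<subseteq> {1..m}")
    case True
    then show ?thesis using EE_same[of i m C] i by (simp add: T_def)
  next
    case False
    have "cl_valued m (pdx i (pdx i F) x)" by (rule pdx_cl, rule pdx_cl, rule Fc)
    then show ?thesis using False i by (simp add: T_def clmul_basis cl_valued_def)
  qed
  have "lap m F x C = (\<Sum>i\<in>?I. pdx i (pdx i F) x C)" by (simp add: lap_def)
  also have "\<dots> = - (\<Sum>i\<in>?I. T i i)" by (simp add: diag sum_negf)
  also have "\<dots> = - dirac_y m (dirac_y m F) x C" using DD split by simp
  finally show "lap m F x C = (- dirac_y m (dirac_y m F)) x C" by simp
qed


lemma lap_iter:
  assumes m: "2 \<le> m" and F: "F \<in> Vm m"
  shows "(lap m ^^ k) F = dmod.act (dirac_y m) ((- (pX ^ 2)) ^ k) F"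
proof (induction k)
  interpret D: dmod "Vm m" "dirac_y m" by (rule dmod_Vm)
  case 0 then show ?case by (simp add: D.act_1)
next
  interpret D: dmod "Vm m" "dirac_y m" by (rule dmod_Vm)
  case (Suc k)
  have G: "D.act ((- (pX ^ 2)) ^ k) F \<in> Vm m" by (rule D.act_V[OF F])
  have "(lap m ^^ Suc k) F = lap m (D.act ((- (pX ^ 2)) ^ k) F)" using Suc by simp
  also have "\<dots> = - dirac_y m (dirac_y m (D.act ((- (pX ^ 2)) ^ k) F))" by (rule lap_DD[OF m G])
  also have "\<dots> = D.act (- (pX ^ 2)) (D.act ((- (pX ^ 2)) ^ k) F)"
  proof -
    let ?H = "D.act ((- (pX ^ 2)) ^ k) F"
    have "D.act (- (pX ^ 2)) ?H = - D.act (pX * pX) ?H" by (simp only: D.act_minus_poly power2_eq_square)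
    also have "D.act (pX * pX) ?H = D.act pX (D.act pX ?H)" by (rule D.act_mult[OF G])
    also have "\<dots> = dirac_y m (dirac_y m ?H)" by (simp only: D.act_X[OF G] D.act_X[OF D.DV[OF G]])
    finally show ?thesis by (rule sym)
  qed
  also have "\<dots> = D.act ((- (pX ^ 2)) ^ Suc k) F"
    by (simp only: power_Suc D.act_mult[OF F])
  finally show ?case .
qed

theorem theorem4:
  fixes m n :: nat and A B :: "point \<Rightarrow> mvec"
  assumes "m \<ge> 2" and "n \<ge> 1"
    and "\<forall>x. cl_valued m (A x)" and "\<forall>x. cl_valued m (B x)"
    and "smooth_cl m A" and "smooth_cl m B"
    and "depends_only {2..m} A" and "depends_only {2..m} B"
  shows "(\<forall>x. (dirac m ^^ n)
              (\<lambda>x. cladd (clmul m (exp_z x) (A x)) (clmul m (exp_zbar x) (B x))) x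
            = (\<lambda>C. 0))
     \<longleftrightarrow> ((\<forall>x. (lap m ^^ n) A x = (\<lambda>C. 0)) \<and>
          (\<forall>x. B x = (\<lambda>C. \<Sum>k = 1..n. cc k * (dirac_y m ^^ (2 * k - 1)) A x C)))"
proof -
  have m: "2 \<le> m" using assms(1) .
  interpret D: dmod "Vm m" "dirac_y m" by (rule dmod_Vm)
  have AV: "A \<in> Vm m" using assms by (simp add: Vm_def)
  have BV: "B \<in> Vm m" using assms by (simp add: Vm_def)
  have Feq: "(\<lambda>x. cladd (clmul m (exp_z x) (A x)) (clmul m (exp_zbar x) (B x))) = Phi m A B"
    by (simp add: Phi_def)
  obtain P Q where PQ: "(D.Mop ^^ n) (A, B) = (P, Q)" by (cases "(D.Mop ^^ n) (A, B)")
  have PV: "P \<in> Vm m" "Q \<in> Vm m" using D.Mop_pow[OF AV BV, of n] PQ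
    by (auto intro: D.Vadd D.act_V AV BV)
  have L: "(\<forall>x. (dirac m ^^ n) (Phi m A B) x = (\<lambda>C. 0)) \<longleftrightarrow> (D.Mop ^^ n) (A, B) = (0, 0)"
  proof -
    have "(\<forall>x. (dirac m ^^ n) (Phi m A B) x = (\<lambda>C. 0)) \<longleftrightarrow> (\<forall>x. Phi m P Q x = (\<lambda>C. 0))"
      using dirac_iter[OF m AV BV, of n] PQ by simp
    also have "\<dots> \<longleftrightarrow> P = 0 \<and> Q = 0" by (rule Phi_zero_iff[OF m PV])
    finally show ?thesis using PQ by simp
  qed
  have R1: "D.act (pX ^ (2 * n)) A = 0 \<longleftrightarrow> (\<forall>x. (lap m ^^ n) A x = (\<lambda>C. 0))"
  proof -
    have "(lap m ^^ n) A = (-1) ^ n *\<^sub>R D.act (pX ^ (2 * n)) A"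
      by (simp add: lap_iter[OF m AV] D.pow_neg_sq D.act_smult)
    then have "(lap m ^^ n) A = 0 \<longleftrightarrow> D.act (pX ^ (2 * n)) A = 0" by simp
    then show ?thesis by (simp add: fun_eq_iff)
  qed
  have R2: "B = D.act (gp n) A \<longleftrightarrow> (\<forall>x. B x = (\<lambda>C. \<Sum>k = 1..n. cc k * (dirac_y m ^^ (2 * k - 1)) A x C))"
  proof -
    have "D.act (gp n) A = (\<Sum>k = 1..n. cc k *\<^sub>R (dirac_y m ^^ (2 * k - 1)) A)"
      by (simp add: gp_def D.act_sum_poly D.act_monom)
    then show ?thesis by (simp add: fun_eq_iff sum_fun_apply)
  qed
  show ?thesis unfolding Feq L D.alg_main[OF AV BV] R1 R2 ..
qed


end
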